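(* Let $K$ be a global function field, fix a prime $\infty$ of $K$, let $\mathcal{O}$ be the ring of elements of $K$ regular at every prime other than $\infty$, and let $\mathbb{F}_q$ be the full constant field of $K$ (so $\mathcal{O}^*=\mathbb{F}_q^*$). Let $\phi\in\mathcal{O}[X]$ be a polynomial of degree $d\geqslant2$ with leading coefficient in $\mathcal{O}^*$. Then $\#\mathrm{Per}(\phi,K)\leqslant\min\{d,q\}$ unless one of the following holds: (a) $\phi$ is conjugate over $K$ to a polynomial with coefficients in $\mathbb{F}_q$, in which case $\#\mathrm{PrePer}(\phi,K)=q$; (b) $\mathrm{Per}(\phi,K)=\mathrm{Fix}(\phi,K)$, in which case $\#\mathrm{Per}(\phi,K)\leqslant d$; (c) $\mathrm{Per}(\phi,K)$ is the union of at least two cycles of the same length $n>1$ and at most one fixed point.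
   Context: A global function field is a finite extension of $\mathbb{F}_p(t)$; its full constant field is the algebraic closure of $\mathbb{F}_p$ in $K$. $\phi$ is viewed as a map $K\to K$. $\mathrm{Per}(\phi,K)$, $\mathrm{Fix}(\phi,K)$, $\mathrm{PrePer}(\phi,K)$ denote respectively the periodic points ($\phi^n(x)=x$ for some $n\geqslant1$), fixed points, and preperiodic points (points with finite forward orbit) of $\phi$ in $K$. "Conjugate over $K$ to $\psi$" means $\psi=\eta\circ\phi\circ\eta^{-1}$ for some invertible change of coordinates $\eta$ defined over $K$. *)

theory Defs
  imports "HOL-Computational_Algebra.Computational_Algebra"
begin

text \<open>The field K is the whole type 'k.  Its prime subfield.\<close>
definition prime_subfield :: "'k::field set" where
  "prime_subfield = {of_int a / of_int b | a b. of_int b \<noteq> (0::'k)}"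

definition poly_over :: "'k::field set \<Rightarrow> 'k poly \<Rightarrow> bool" where
  "poly_over F p \<longleftrightarrow> (\<forall>i. coeff p i \<in> F)"

definition algebraic_over :: "'k::field set \<Rightarrow> 'k \<Rightarrow> bool" where
  "algebraic_over F x \<longleftrightarrow> (\<exists>p. p \<noteq> 0 \<and> poly_over F p \<and> poly p x = 0)"

definition rat_fun_field :: "'k::field set \<Rightarrow> 'k \<Rightarrow> 'k set" where
  "rat_fun_field F t = {poly a t / poly b t | a b. poly_over F a \<and> poly_over F b \<and> poly b t \<noteq> 0}"

definition finite_dim_over :: "'k::field set \<Rightarrow> bool" where
  "finite_dim_over L \<longleftrightarrow>
     (\<exists>B::'k set. finite B \<and> (\<forall>x. \<exists>c. (\<forall>b\<in>B. c b \<in> L) \<and> x = (\<Sum>b\<in>B. c b * b)))"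

definition global_function_field :: "'k::field itself \<Rightarrow> bool" where
  "global_function_field _ \<longleftrightarrow>
     (\<exists>p::nat. prime p \<and> of_nat p = (0::'k)) \<and>
     (\<exists>t::'k. \<not> algebraic_over prime_subfield t \<and> finite_dim_over (rat_fun_field prime_subfield t))"

definition constant_field :: "'k::field set" where
  "constant_field = {x. algebraic_over prime_subfield x}"

text \<open>Primes of K, represented by their normalized discrete valuations
  v : K* \<rightarrow> Z (surjective); by convention v 0 = 0 (the value at 0 is a junk value).\<close>
definition dval :: "('k::field \<Rightarrow> int) \<Rightarrow> bool" where
  "dval v \<longleftrightarrow> v 0 = 0 \<and>
     (\<forall>x y. x \<noteq> 0 \<longrightarrow> y \<noteq> 0 \<longrightarrow> v (x * y) = v x + v y) \<and>
     (\<forall>x y. x \<noteq> 0 \<longrightarrow> y \<noteq> 0 \<longrightarrow> x + y \<noteq> 0 \<longrightarrow> min (v x) (v y) \<le> v (x + y)) \<and>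
     (\<forall>n. \<exists>x. x \<noteq> 0 \<and> v x = n)"

definition ring_O :: "('k::field \<Rightarrow> int) \<Rightarrow> 'k set" where
  "ring_O vinf = {x. \<forall>v. dval v \<and> v \<noteq> vinf \<longrightarrow> x = 0 \<or> 0 \<le> v x}"

definition Per :: "('a \<Rightarrow> 'a) \<Rightarrow> 'a set" where
  "Per f = {x. \<exists>n\<ge>1. (f ^^ n) x = x}"

definition Fix :: "('a \<Rightarrow> 'a) \<Rightarrow> 'a set" where
  "Fix f = {x. f x = x}"

definition PrePer :: "('a \<Rightarrow> 'a) \<Rightarrow> 'a set" where
  "PrePer f = {x. finite {(f ^^ n) x | n. True}}"

definition exact_period :: "('a \<Rightarrow> 'a) \<Rightarrow> nat \<Rightarrow> 'a \<Rightarrow> bool" where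
  "exact_period f n x \<longleftrightarrow> n \<ge> 1 \<and> (f ^^ n) x = x \<and> (\<forall>m. 1 \<le> m \<and> m < n \<longrightarrow> (f ^^ m) x \<noteq> x)"

text \<open>phi is conjugate over K, by an affine change of coordinates eta(x) = a x + b,
  to a polynomial psi with coefficients in F.\<close>
definition conj_to_poly_over :: "'k::field set \<Rightarrow> 'k poly \<Rightarrow> bool" where
  "conj_to_poly_over F \<phi> \<longleftrightarrow>
     (\<exists>a b \<psi>. a \<noteq> 0 \<and> poly_over F \<psi> \<and> (\<forall>x. poly \<psi> x = a * poly \<phi> ((x - b) / a) + b))"

definition two_cycles_condition :: "('a \<Rightarrow> 'a) \<Rightarrow> bool" where
  "two_cycles_condition f \<longleftrightarrow>
     (\<exists>n>1. (\<forall>x\<in>Per f. x \<in> Fix f \<or> exact_period f n x) \<and>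
            (\<forall>x\<in>Fix f. \<forall>y\<in>Fix f. x = y) \<and>
            (\<exists>x y. exact_period f n x \<and> exact_period f n y \<and> y \<notin> {(f ^^ m) x | m. True}))"

end

theory Submission
  imports Defs
begin


definition subring :: "'k::field set \<Rightarrow> bool" where
  "subring R \<longleftrightarrow> 0 \<in> R \<and> 1 \<in> R \<and> (\<forall>x\<in>R. \<forall>y\<in>R. x + y \<in> R \<and> x * y \<in> R) \<and> (\<forall>x\<in>R. - x \<in> R)"

definition subfield :: "'k::field set \<Rightarrow> bool" where
  "subfield L \<longleftrightarrow> subring L \<and> (\<forall>x\<in>L. inverse x \<in> L)"

lemma subringD:
  assumes "subring R"
  shows "0 \<in> R" "1 \<in> R" "x \<in> R \<Longrightarrow> y \<in> R \<Longrightarrow> x + y \<in> R"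
    "x \<in> R \<Longrightarrow> y \<in> R \<Longrightarrow> x * y \<in> R" "x \<in> R \<Longrightarrow> - x \<in> R"
    "x \<in> R \<Longrightarrow> y \<in> R \<Longrightarrow> x - y \<in> R"
proof -
  show "0 \<in> R" "1 \<in> R" "x \<in> R \<Longrightarrow> y \<in> R \<Longrightarrow> x + y \<in> R"
    "x \<in> R \<Longrightarrow> y \<in> R \<Longrightarrow> x * y \<in> R" "x \<in> R \<Longrightarrow> - x \<in> R"
    using assms unfolding subring_def by auto
  show "x \<in> R \<Longrightarrow> y \<in> R \<Longrightarrow> x - y \<in> R"
    using assms unfolding subring_def by (metis diff_conv_add_uminus)
qed

lemma subfieldD:
  assumes "subfield L"
  shows "subring L" "x \<in> L \<Longrightarrow> inverse x \<in> L" "x \<in> L \<Longrightarrow> y \<in> L \<Longrightarrow> x / y \<in> L"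
  using assms subringD[of L] unfolding subfield_def by (auto simp: divide_inverse)

lemma subring_sum:
  assumes "subring R" "\<And>i. i \<in> I \<Longrightarrow> f i \<in> R"
  shows "sum f I \<in> R"
proof (cases "finite I")
  case True
  then show ?thesis using assms(2)
    by (induction I rule: finite_induct) (auto intro: subringD[OF assms(1)])
qed (simp add: subringD[OF assms(1)])

lemma subring_prod:
  assumes "subring R" "\<And>i. i \<in> I \<Longrightarrow> f i \<in> R"
  shows "prod f I \<in> R"
proof (cases "finite I")
  case True
  then show ?thesis using assms(2)
    by (induction I rule: finite_induct) (auto intro: subringD[OF assms(1)])
qed (simp add: subringD[OF assms(1)])

lemma subring_power:
  assumes "subring R" "x \<in> R" shows "x ^ n \<in> R"
  by (induction n) (auto intro: subringD[OF assms(1)] assms(2))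

lemma subring_of_nat:
  assumes "subring R" shows "of_nat n \<in> R"
  by (induction n) (auto intro: subringD[OF assms(1)])

lemma subring_poly:
  assumes "subring R" "poly_over R f" "s \<in> R"
  shows "poly f s \<in> R"
  unfolding poly_altdef
  using assms by (intro subring_sum) (auto intro!: subringD(4)[OF assms(1)] subring_power simp: poly_over_def)

lemma poly_over_0[simp]: "subring R \<Longrightarrow> poly_over R 0"
  by (simp add: poly_over_def subringD)

lemma poly_over_const: "subring R \<Longrightarrow> c \<in> R \<Longrightarrow> poly_over R [:c:]"
  by (auto simp: poly_over_def coeff_pCons subringD split: nat.split)

lemma poly_over_pCons: "subring R \<Longrightarrow> c \<in> R \<Longrightarrow> poly_over R p \<Longrightarrow> poly_over R (pCons c p)"
  by (auto simp: poly_over_def coeff_pCons split: nat.split)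

lemma poly_over_monom: "subring R \<Longrightarrow> c \<in> R \<Longrightarrow> poly_over R (monom c n)"
  by (auto simp: poly_over_def coeff_monom subringD)

lemma poly_over_add: "subring R \<Longrightarrow> poly_over R p \<Longrightarrow> poly_over R q \<Longrightarrow> poly_over R (p + q)"
  by (auto simp: poly_over_def intro: subringD)

lemma poly_over_uminus: "subring R \<Longrightarrow> poly_over R p \<Longrightarrow> poly_over R (- p)"
  by (auto simp: poly_over_def intro: subringD)

lemma poly_over_diff: "subring R \<Longrightarrow> poly_over R p \<Longrightarrow> poly_over R q \<Longrightarrow> poly_over R (p - q)"
  by (auto simp: poly_over_def intro: subringD)

lemma poly_over_smult: "subring R \<Longrightarrow> c \<in> R \<Longrightarrow> poly_over R p \<Longrightarrow> poly_over R (smult c p)"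
  by (auto simp: poly_over_def intro: subringD)

lemma poly_over_mult: "subring R \<Longrightarrow> poly_over R p \<Longrightarrow> poly_over R q \<Longrightarrow> poly_over R (p * q)"
  unfolding poly_over_def coeff_mult
  by (auto intro!: subring_sum subringD(4))

lemma poly_over_power: "subring R \<Longrightarrow> poly_over R p \<Longrightarrow> poly_over R (p ^ n)"
  by (induction n) (auto intro: poly_over_mult simp: poly_over_const[of R 1, simplified] subringD one_pCons)

lemma poly_over_prod: "subring R \<Longrightarrow> (\<And>i. i \<in> I \<Longrightarrow> poly_over R (f i)) \<Longrightarrow> poly_over R (prod f I)"
proof (cases "finite I")
  case True
  assume "subring R" "\<And>i. i \<in> I \<Longrightarrow> poly_over R (f i)"
  with True show ?thesis
    by (induction I rule: finite_induct) (auto intro: poly_over_mult simp: poly_over_const[of R 1, simplified] subringD one_pCons)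
qed (auto simp: poly_over_const[of R 1, simplified] subringD one_pCons)

lemma poly_over_sum: "subring R \<Longrightarrow> (\<And>i. i \<in> I \<Longrightarrow> poly_over R (f i)) \<Longrightarrow> poly_over R (sum f I)"
proof (cases "finite I")
  case True
  assume "subring R" "\<And>i. i \<in> I \<Longrightarrow> poly_over R (f i)"
  with True show ?thesis
    by (induction I rule: finite_induct) (auto intro: poly_over_add)
qed auto

lemma poly_over_pcompose: "subring R \<Longrightarrow> poly_over R p \<Longrightarrow> poly_over R q \<Longrightarrow> poly_over R (pcompose p q)"
proof (induction p rule: pCons_induct)
  case 0 then show ?case by simp
next
  case (pCons a p)
  have "a \<in> R" using pCons.prems by (metis coeff_pCons_0 poly_over_def)
  have "poly_over R p" using pCons.prems unfolding poly_over_def by (metis coeff_pCons_Suc)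
  then show ?case using pCons \<open>a \<in> R\<close>
    by (auto simp: pcompose_pCons intro!: poly_over_add poly_over_mult poly_over_const)
qed

lemma poly_over_mono: "poly_over R p \<Longrightarrow> R \<subseteq> S \<Longrightarrow> poly_over S p"
  by (auto simp: poly_over_def)

lemma dvalD:
  assumes "dval v"
  shows "v 0 = 0" "x \<noteq> 0 \<Longrightarrow> y \<noteq> 0 \<Longrightarrow> v (x * y) = v x + v y"
    "x \<noteq> 0 \<Longrightarrow> y \<noteq> 0 \<Longrightarrow> x + y \<noteq> 0 \<Longrightarrow> min (v x) (v y) \<le> v (x + y)"
    "\<exists>x. x \<noteq> 0 \<and> v x = n"
  using assms unfolding dval_def by auto

lemma dval_1: "dval v \<Longrightarrow> v 1 = 0"
  using dvalD(2)[of v 1 1] by simp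

lemma dval_inverse: "dval v \<Longrightarrow> x \<noteq> 0 \<Longrightarrow> v (inverse x) = - v x"
  using dvalD(2)[of v x "inverse x"] dval_1[of v] by simp

lemma dval_divide: "dval v \<Longrightarrow> x \<noteq> 0 \<Longrightarrow> y \<noteq> 0 \<Longrightarrow> v (x / y) = v x - v y"
  by (simp add: divide_inverse dvalD(2) dval_inverse)

lemma dval_m1: "dval v \<Longrightarrow> v (-1) = 0"
  using dvalD(2)[of v "-1" "-1"] dval_1[of v] by simp

lemma dval_uminus: "dval v \<Longrightarrow> v (- x) = v x"
  using dvalD(2)[of v "-1" x] dval_m1[of v] by (cases "x = 0") (auto simp: dvalD(1))

lemma dval_power: "dval v \<Longrightarrow> x \<noteq> 0 \<Longrightarrow> v (x ^ n) = int n * v x"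
  by (induction n) (auto simp: dval_1 dvalD(2) algebra_simps)

lemma dval_diff: "dval v \<Longrightarrow> x \<noteq> 0 \<Longrightarrow> y \<noteq> 0 \<Longrightarrow> x - y \<noteq> 0 \<Longrightarrow> min (v x) (v y) \<le> v (x - y)"
  using dvalD(3)[of v x "- y"] dval_uminus[of v y] by simp

lemma dval_sum_gt:
  assumes "dval v" "\<And>i. i \<in> I \<Longrightarrow> a i = 0 \<or> v (a i) > c"
  shows "sum a I = 0 \<or> v (sum a I) > c"
proof (cases "finite I")
  case True
  then show ?thesis using assms(2)
  proof (induction I rule: finite_induct)
    case (insert i I)
    have h1: "a i = 0 \<or> v (a i) > c" using insert by auto
    have h2: "sum a I = 0 \<or> v (sum a I) > c" using insert by auto
    show ?case
    proof (cases "a i = 0 \<or> sum a I = 0 \<or> a i + sum a I = 0")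
      case True
      have "sum a (insert i I) = a i + sum a I" using insert(1,2) by simp
      then show ?thesis using h1 h2 True by auto
    next
      case False
      then have "min (v (a i)) (v (sum a I)) \<le> v (a i + sum a I)"
        by (intro dvalD(3)[OF assms(1)]) auto
      moreover have "c < v (a i)" using h1 False by auto
      moreover have "c < v (sum a I)" using h2 False by auto
      moreover have "sum a (insert i I) = a i + sum a I" using insert(1,2) by simp
      ultimately show ?thesis by auto
    qed
  qed simp
qed simp

lemma dval_sum_strict:
  assumes "dval v" "finite I" "j \<in> I" "a j \<noteq> 0"
    "\<And>i. i \<in> I \<Longrightarrow> i \<noteq> j \<Longrightarrow> a i = 0 \<or> v (a i) > v (a j)"
  shows "sum a I \<noteq> 0 \<and> v (sum a I) = v (a j)"
proof -
  define S where "S = sum a (I - {j})"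
  have sumeq: "sum a I = a j + S"
    unfolding S_def using assms(2,3) by (simp add: sum.remove)
  have hS: "S = 0 \<or> v S > v (a j)"
    unfolding S_def by (rule dval_sum_gt[OF assms(1)]) (use assms(5) in auto)
  show ?thesis
  proof (cases "S = 0")
    case True then show ?thesis using sumeq assms(4) by simp
  next
    case False
    then have vS: "v S > v (a j)" using hS by auto
    have ne: "a j + S \<noteq> 0"
    proof
      assume "a j + S = 0"
      then have "S = - a j" by (simp add: add_eq_0_iff2)
      then show False using vS dval_uminus[OF assms(1)] by simp
    qed
    have 1: "min (v (a j)) (v S) \<le> v (a j + S)"
      using dvalD(3)[OF assms(1) assms(4) False ne] .
    have "a j = (a j + S) - S" by simp
    then have 2: "min (v (a j + S)) (v S) \<le> v (a j)"
      using dval_diff[OF assms(1) ne False] assms(4) by metis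
    show ?thesis using 1 2 vS ne sumeq by auto
  qed
qed


section \<open>Prime subfield\<close>

lemma Fp_of_int: "of_int a \<in> (prime_subfield :: 'k::field set)"
  unfolding prime_subfield_def by (rule CollectI, rule exI[of _ a], rule exI[of _ 1]) simp

lemma Fp_subfield: "subfield (prime_subfield :: 'k::field set)"
proof -
  let ?F = "prime_subfield :: 'k set"
  have add: "x + y \<in> ?F" if hx: "x \<in> ?F" and hy: "y \<in> ?F" for x y
  proof -
    obtain a b where x: "x = of_int a / of_int b" "of_int b \<noteq> (0::'k)" using hx unfolding prime_subfield_def by blast
    obtain c d where y: "y = of_int c / of_int d" "of_int d \<noteq> (0::'k)" using hy unfolding prime_subfield_def by blast
    have "x + y = of_int (a * d + c * b) / of_int (b * d)" using x y by (simp add: field_simps)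
    moreover have "of_int (b * d) \<noteq> (0::'k)" using x y by simp
    ultimately show ?thesis unfolding prime_subfield_def by blast
  qed
  have mul: "x * y \<in> ?F" if hx: "x \<in> ?F" and hy: "y \<in> ?F" for x y
  proof -
    obtain a b where x: "x = of_int a / of_int b" "of_int b \<noteq> (0::'k)" using hx unfolding prime_subfield_def by blast
    obtain c d where y: "y = of_int c / of_int d" "of_int d \<noteq> (0::'k)" using hy unfolding prime_subfield_def by blast
    have "x * y = of_int (a * c) / of_int (b * d)" using x y by (simp add: field_simps)
    moreover have "of_int (b * d) \<noteq> (0::'k)" using x y by simp
    ultimately show ?thesis unfolding prime_subfield_def by blast
  qed
  have neg: "- x \<in> ?F" if hx: "x \<in> ?F" for x
  proof -
    obtain a b where x: "x = of_int a / of_int b" "of_int b \<noteq> (0::'k)" using hx unfolding prime_subfield_def by blast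
    have "- x = of_int (- a) / of_int b" using x by simp
    then show ?thesis using x unfolding prime_subfield_def by blast
  qed
  have inv: "inverse x \<in> ?F" if hx: "x \<in> ?F" for x
  proof -
    obtain a b where x: "x = of_int a / of_int b" "of_int b \<noteq> (0::'k)" using hx unfolding prime_subfield_def by blast
    show ?thesis
    proof (cases "of_int a = (0::'k)")
      case True
      then have "inverse x = of_int 0 / of_int 1" using x by simp
      then show ?thesis unfolding prime_subfield_def by (metis (mono_tags, lifting) CollectI of_int_1 one_neq_zero)
    next
      case False
      then have "inverse x = of_int b / of_int a" using x by simp
      then show ?thesis using False unfolding prime_subfield_def by blast
    qed
  qed
  have "0 \<in> ?F" "1 \<in> ?F" using Fp_of_int[of 0] Fp_of_int[of 1] by simp_all
  then show ?thesis unfolding subfield_def subring_def using add mul neg inv by simp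
qed

lemma Fp_subring: "subring (prime_subfield :: 'k::field set)"
  using Fp_subfield subfieldD(1) by blast

lemma Fp_finite:
  assumes "of_nat p = (0::'k::field)" "p > 0"
  shows "finite (prime_subfield :: 'k set)"
proof -
  have modeq: "(of_int a :: 'k) = of_int (a mod int p)" for a
  proof -
    have "a = int p * (a div int p) + a mod int p" by simp
    then have "(of_int a :: 'k) = of_int (int p) * of_int (a div int p) + of_int (a mod int p)"
      by (metis of_int_add of_int_mult)
    then show ?thesis using assms(1) by simp
  qed
  have "prime_subfield \<subseteq> (\<lambda>(i, j). (of_int i / of_int j :: 'k)) ` ({0..<int p} \<times> {0..<int p})"
  proof
    fix x :: 'k assume "x \<in> prime_subfield"
    then obtain a b where x: "x = of_int a / of_int b" unfolding prime_subfield_def by blast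
    then have "x = of_int (a mod int p) / of_int (b mod int p)" by (simp add: modeq[of a] modeq[of b])
    moreover have "(a mod int p, b mod int p) \<in> {0..<int p} \<times> {0..<int p}" using assms(2) by simp
    ultimately show "x \<in> (\<lambda>(i, j). (of_int i / of_int j :: 'k)) ` ({0..<int p} \<times> {0..<int p})"
      by (metis (no_types, lifting) case_prod_conv image_eqI)
  qed
  then show ?thesis by (rule finite_subset) simp
qed

section \<open>Linear dependence\<close>

definition in_span :: "'k::field set \<Rightarrow> 'k set \<Rightarrow> 'k \<Rightarrow> bool" where
  "in_span L B z \<longleftrightarrow> (\<exists>c. (\<forall>b\<in>B. c b \<in> L) \<and> z = (\<Sum>b\<in>B. c b * b))"

lemma in_span_insert:
  assumes "finite B" "b \<notin> B" "in_span L (insert b B) z"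
  shows "\<exists>\<alpha> w. \<alpha> \<in> L \<and> in_span L B w \<and> z = \<alpha> * b + w"
proof -
  obtain c where c: "\<forall>x\<in>insert b B. c x \<in> L" "z = (\<Sum>x\<in>insert b B. c x * x)"
    using assms(3) unfolding in_span_def by blast
  have "z = c b * b + (\<Sum>x\<in>B. c x * x)" using c(2) assms(1,2) by simp
  moreover have "in_span L B (\<Sum>x\<in>B. c x * x)" unfolding in_span_def using c(1) by blast
  ultimately show ?thesis using c(1) by blast
qed

lemma in_span_comb:
  assumes "subfield L" "finite B" "in_span L B z1" "in_span L B z2" "\<gamma> \<in> L"
  shows "in_span L B (z1 - \<gamma> * z2)"
proof -
  obtain c1 where c1: "\<forall>x\<in>B. c1 x \<in> L" "z1 = (\<Sum>x\<in>B. c1 x * x)" using assms(3) unfolding in_span_def by blast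
  obtain c2 where c2: "\<forall>x\<in>B. c2 x \<in> L" "z2 = (\<Sum>x\<in>B. c2 x * x)" using assms(4) unfolding in_span_def by blast
  have "z1 - \<gamma> * z2 = (\<Sum>x\<in>B. (c1 x - \<gamma> * c2 x) * x)"
    unfolding c1(2) c2(2) by (simp add: sum_distrib_left sum_subtractf algebra_simps)
  moreover have "\<forall>x\<in>B. c1 x - \<gamma> * c2 x \<in> L"
  proof
    fix x assume "x \<in> B"
    have R: "subring L" using subfieldD(1)[OF assms(1)] .
    show "c1 x - \<gamma> * c2 x \<in> L"
      by (rule subringD(6)[OF R]) (use c1(1) c2(1) assms(5) \<open>x \<in> B\<close> subringD(4)[OF R] in auto)
  qed
  ultimately show ?thesis unfolding in_span_def by (intro exI[of _ "\<lambda>x. c1 x - \<gamma> * c2 x"]) simp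
qed

lemma steinitz:
  assumes "subfield L" "finite B"
  shows "finite I \<Longrightarrow> card I > card B \<Longrightarrow> (\<forall>i\<in>I. in_span L B (y i)) \<Longrightarrow>
     \<exists>c. (\<forall>i\<in>I. c i \<in> L) \<and> (\<exists>i\<in>I. c i \<noteq> 0) \<and> (\<Sum>i\<in>I. c i * y i) = 0"
  using assms(2)
proof (induction B arbitrary: I y rule: finite_induct)
  case empty
  then obtain i0 where i0: "i0 \<in> I" by (metis card.empty card_gt_0_iff equals0I)
  have y0: "y i = 0" if "i \<in> I" for i using empty(3) that unfolding in_span_def by simp
  define c where "c = (\<lambda>i. if i = i0 then (1::'a) else 0)"
  have "(\<Sum>i\<in>I. c i * y i) = 0" using y0 by (simp add: c_def)
  moreover have "\<forall>i\<in>I. c i \<in> L" using subringD[OF subfieldD(1)[OF assms(1)]] by (simp add: c_def)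
  moreover have "c i0 \<noteq> 0" by (simp add: c_def)
  ultimately show ?case using i0 by blast
next
  case (insert b B)
  have "\<forall>i\<in>I. \<exists>\<alpha> w. \<alpha> \<in> L \<and> in_span L B w \<and> y i = \<alpha> * b + w"
    using insert(1,2,6) in_span_insert by blast
  then obtain \<alpha> z where az: "\<And>i. i \<in> I \<Longrightarrow> \<alpha> i \<in> L \<and> in_span L B (z i) \<and> y i = \<alpha> i * b + z i"
    by metis
  have cardB: "card (insert b B) = Suc (card B)" using insert(1,2) by simp
  show ?case
  proof (cases "\<forall>i\<in>I. \<alpha> i = 0")
    case True
    then have "\<forall>i\<in>I. in_span L B (y i)" using az by auto
    moreover have "card I > card B" using insert(5) cardB by simp
    ultimately show ?thesis using insert(3)[OF insert(4)] by blast
  next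
    case False
    then obtain j where j: "j \<in> I" "\<alpha> j \<noteq> 0" by blast
    define I' where "I' = I - {j}"
    define y' where "y' = (\<lambda>i. z i - (\<alpha> i / \<alpha> j) * z j)"
    have fI': "finite I'" using insert(4) by (simp add: I'_def)
    have cI': "card I' > card B" using insert(5) cardB j(1) insert(4) by (simp add: I'_def)
    have "\<forall>i\<in>I'. in_span L B (y' i)"
    proof
      fix i assume "i \<in> I'"
      then have "i \<in> I" by (simp add: I'_def)
      show "in_span L B (y' i)" unfolding y'_def
        by (rule in_span_comb[OF assms(1) insert(1)]) (use az[OF \<open>i \<in> I\<close>] az[OF j(1)] in \<open>auto intro!: subfieldD(3)[OF assms(1)]\<close>)
    qed
    then obtain c' where c': "\<forall>i\<in>I'. c' i \<in> L" "\<exists>i\<in>I'. c' i \<noteq> 0" "(\<Sum>i\<in>I'. c' i * y' i) = 0"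
      using insert(3)[OF fI' cI'] by blast
    define A where "A = (\<Sum>i\<in>I'. c' i * \<alpha> i)"
    define c where "c = (\<lambda>i. if i = j then - (A / \<alpha> j) else c' i)"
    have AL: "A \<in> L" unfolding A_def using c'(1) az I'_def
      by (auto intro!: subring_sum subringD(4) subfieldD(1)[OF assms(1)])
    have cL: "\<forall>i\<in>I. c i \<in> L" unfolding c_def using c'(1) AL az j I'_def
      by (auto intro!: subringD(5)[OF subfieldD(1)[OF assms(1)]] subfieldD(3)[OF assms(1)])
    have cnz: "\<exists>i\<in>I. c i \<noteq> 0" using c'(2) unfolding c_def I'_def by auto
    have e1: "(\<Sum>i\<in>I. c i * y i) = c j * y j + (\<Sum>i\<in>I'. c' i * y i)"
      unfolding I'_def c_def using insert(4) j(1) by (simp add: sum.remove)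
    have e2: "(\<Sum>i\<in>I'. c' i * y i) = A * b + (\<Sum>i\<in>I'. c' i * z i)"
    proof -
      have "(\<Sum>i\<in>I'. c' i * y i) = (\<Sum>i\<in>I'. c' i * \<alpha> i * b + c' i * z i)"
        using az unfolding I'_def by (intro sum.cong) (auto simp: algebra_simps)
      also have "\<dots> = A * b + (\<Sum>i\<in>I'. c' i * z i)"
        unfolding A_def by (simp add: sum.distrib sum_distrib_right)
      finally show ?thesis .
    qed
    have e3: "(\<Sum>i\<in>I'. c' i * y' i) = (\<Sum>i\<in>I'. c' i * z i) - (A / \<alpha> j) * z j"
    proof -
      have "(\<Sum>i\<in>I'. c' i * y' i) = (\<Sum>i\<in>I'. c' i * z i - (c' i * \<alpha> i) * (z j / \<alpha> j))"
        unfolding y'_def by (intro sum.cong) (auto simp: algebra_simps)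
      also have "\<dots> = (\<Sum>i\<in>I'. c' i * z i) - A * (z j / \<alpha> j)"
        unfolding A_def sum_subtractf sum_distrib_right by (rule refl)
      finally show ?thesis by (simp add: field_simps)
    qed
    have "c j * y j = - A * b - (A / \<alpha> j) * z j"
      using az[OF j(1)] j(2) by (simp add: c_def field_simps)
    then have "(\<Sum>i\<in>I. c i * y i) = (\<Sum>i\<in>I'. c' i * y' i)"
      using e1 e2 e3 by simp
    then show ?thesis using c'(3) cL cnz by auto
  qed
qed

lemma powers_dependent:
  assumes "subfield L" "finite_dim_over L"
  obtains N where "\<And>y. \<exists>c. (\<forall>i\<le>N. c i \<in> L) \<and> (\<exists>i\<le>N. c i \<noteq> 0) \<and> (\<Sum>i\<le>N. c i * y ^ i) = 0"
proof -
  obtain B where B: "finite B" "\<And>x. \<exists>c. (\<forall>b\<in>B. c b \<in> L) \<and> x = (\<Sum>b\<in>B. c b * b)"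
    using assms(2) unfolding finite_dim_over_def by blast
  have "\<exists>c. (\<forall>i\<le>card B. c i \<in> L) \<and> (\<exists>i\<le>card B. c i \<noteq> 0) \<and> (\<Sum>i\<le>card B. c i * y ^ i) = 0" for y
  proof -
    have sp: "\<forall>i\<in>{..card B}. in_span L B (y ^ i)" using B(2) unfolding in_span_def by blast
    have "card {..card B} > card B" by simp
    from steinitz[OF assms(1) B(1) _ this sp] show ?thesis by (simp add: Ball_def Bex_def)
  qed
  then show ?thesis using that by blast
qed


section \<open>Valuation rings (Chevalley)\<close>

definition polys_at :: "'k::field set \<Rightarrow> 'k \<Rightarrow> 'k set" where
  "polys_at F s = {poly f s | f. poly_over F f}"

lemma polys_at_subring:
  assumes "subring F" shows "subring (polys_at F s)"
proof -
  have "0 \<in> polys_at F s" unfolding polys_at_def using poly_over_0[OF assms] by force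
  moreover have "1 \<in> polys_at F s" unfolding polys_at_def
    using poly_over_const[OF assms subringD(2)[OF assms]] by (metis (mono_tags, lifting) CollectI poly_const_conv)
  moreover have "\<forall>a\<in>polys_at F s. \<forall>b\<in>polys_at F s. a + b \<in> polys_at F s \<and> a * b \<in> polys_at F s"
  proof (intro ballI conjI)
    fix a b assume "a \<in> polys_at F s" "b \<in> polys_at F s"
    then obtain f g where fg: "poly_over F f" "poly_over F g" "a = poly f s" "b = poly g s"
      unfolding polys_at_def by blast
    show "a + b \<in> polys_at F s" unfolding polys_at_def
      using poly_over_add[OF assms fg(1,2)] fg(3,4) by (metis (mono_tags, lifting) CollectI poly_add)
    show "a * b \<in> polys_at F s" unfolding polys_at_def
      using poly_over_mult[OF assms fg(1,2)] fg(3,4) by (metis (mono_tags, lifting) CollectI poly_mult)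
  qed
  moreover have "\<forall>a\<in>polys_at F s. - a \<in> polys_at F s"
  proof
    fix a assume "a \<in> polys_at F s"
    then obtain f where f: "poly_over F f" "a = poly f s" unfolding polys_at_def by blast
    then show "- a \<in> polys_at F s" unfolding polys_at_def
      using poly_over_uminus[OF assms f(1)] by (metis (mono_tags, lifting) CollectI poly_minus)
  qed
  ultimately show ?thesis unfolding subring_def by blast
qed

lemma polys_at_const: "subring F \<Longrightarrow> c \<in> F \<Longrightarrow> c \<in> polys_at F s"
  unfolding polys_at_def using poly_over_const[of F c] by (metis (mono_tags, lifting) CollectI poly_const_conv)

lemma polys_at_var: "subring F \<Longrightarrow> s \<in> polys_at F s"
  unfolding polys_at_def using poly_over_pCons[of F 0 "[:1:]"] poly_over_const[of F 1] subringD[of F]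
  by (metis (mono_tags, lifting) CollectI mult.right_neutral poly_pCons poly_const_conv add_0)

definition vring :: "'k::field set \<Rightarrow> bool" where
  "vring V \<longleftrightarrow> subring V \<and> (\<forall>y. y \<noteq> 0 \<longrightarrow> y \<in> V \<or> inverse y \<in> V)"

lemma not_algebraic_nonzero: "subring F \<Longrightarrow> \<not> algebraic_over F x \<Longrightarrow> x \<noteq> 0"
  unfolding algebraic_over_def
  using poly_over_pCons[of F 0 "[:1:]"] poly_over_const[of F 1] subringD[of F]
  by (metis pCons_eq_0_iff poly_pCons mult_zero_left add_0 one_neq_zero pCons_0_0)

lemma not_algebraic_poly:
  "\<not> algebraic_over F x \<Longrightarrow> poly_over F f \<Longrightarrow> f \<noteq> 0 \<Longrightarrow> poly f x \<noteq> 0"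
  unfolding algebraic_over_def by blast

lemma chev_reduce:
  fixes I V :: "'k::field set"
  assumes V: "subring V" and IV: "I \<subseteq> V"
    and I0: "0 \<in> I" and Iadd: "\<And>a b. a \<in> I \<Longrightarrow> b \<in> I \<Longrightarrow> a - b \<in> I"
    and Imul: "\<And>a r. a \<in> I \<Longrightarrow> r \<in> V \<Longrightarrow> r * a \<in> I"
    and I1: "1 \<notin> I"
    and Iinv: "\<And>b. b \<in> I \<Longrightarrow> inverse (1 - b) \<in> V"
    and y: "y \<noteq> 0"
    and f: "poly_over I f" "poly f y = 1"
    and g: "poly_over I g" "poly g (inverse y) = 1"
    and deg: "degree g \<le> degree f"
  shows "\<exists>f'. poly_over I f' \<and> poly f' y = 1 \<and> degree f' < degree f"
proof -
  define n where "n = degree f"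
  define k where "k = degree g"
  have Ineg: "- a \<in> I" if "a \<in> I" for a using Iadd[OF I0 that] by simp
  have n1: "n \<ge> 1"
  proof (rule ccontr)
    assume "\<not> n \<ge> 1"
    then have "n = 0" by simp
    then have "poly f y = coeff f 0" unfolding n_def by (metis degree_0_id poly_const_conv)
    then show False using f I1 unfolding poly_over_def by metis
  qed
  define G where "G = reflect_poly g"
  have polyG: "poly G y = y ^ k" unfolding G_def k_def using poly_reflect_poly_nz[OF y, of g] g(2) by simp
  define H where "H = monom 1 k - G"
  have polyH: "poly H y = 0" unfolding H_def by (simp add: polyG poly_monom)
  define \<beta>0 where "\<beta>0 = coeff g 0"
  have b0I: "\<beta>0 \<in> I" using g(1) unfolding poly_over_def \<beta>0_def by blast
  define u where "u = inverse (1 - \<beta>0)"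
  have uV: "u \<in> V" unfolding u_def using Iinv[OF b0I] .
  have b0ne: "1 - \<beta>0 \<noteq> 0" using b0I I1 by auto
  define H' where "H' = smult u H"
  have polyH': "poly H' y = 0" unfolding H'_def by (simp add: polyH)
  have coeffG: "coeff G i = (if i > k then 0 else coeff g (k - i))" for i
    unfolding G_def k_def by (rule coeff_reflect_poly)
  have H'k: "coeff H' k = 1"
    unfolding H'_def H_def using b0ne by (simp add: coeffG u_def \<beta>0_def coeff_monom field_simps)
  have H'lt: "coeff H' i \<in> I" if "i < k" for i
  proof -
    have "coeff H' i = u * (- coeff g (k - i))"
      unfolding H'_def H_def using that by (simp add: coeffG coeff_monom)
    moreover have "- coeff g (k - i) \<in> I" using g(1) Ineg unfolding poly_over_def by blast
    ultimately show ?thesis using Imul[OF _ uV] by (metis mult_minus_right)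
  qed
  have H'gt: "coeff H' i = 0" if "i > k" for i
    unfolding H'_def H_def using that by (simp add: coeffG coeff_monom)
  have H'V: "coeff H' i \<in> V" for i
  proof -
    consider "i < k" | "i = k" | "i > k" by linarith
    then show ?thesis
      by cases (use H'lt IV H'k H'gt subringD[OF V] in auto)
  qed
  define c where "c = lead_coeff f"
  have cI: "c \<in> I" using f(1) unfolding poly_over_def c_def by blast
  define f' where "f' = f - smult c (monom 1 (n - k) * H')"
  have polyf': "poly f' y = 1" unfolding f'_def using f(2) polyH' by (simp add: poly_monom)
  have coef': "coeff f' i = coeff f i - (if i < n - k then 0 else c * coeff H' (i - (n - k)))" for i
    unfolding f'_def by (simp add: coeff_monom_mult)
  have f'I: "poly_over I f'"
    unfolding poly_over_def
  proof
    fix i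
    have "coeff f i \<in> I" using f(1) unfolding poly_over_def by blast
    moreover have "(if i < n - k then 0 else c * coeff H' (i - (n - k))) \<in> I"
      using I0 Imul[OF cI H'V] by (simp add: mult.commute)
    ultimately show "coeff f' i \<in> I" unfolding coef' by (rule Iadd)
  qed
  have "degree f' < n"
  proof (rule degree_lessI)
    show "f' \<noteq> 0 \<or> 0 < n" using n1 by simp
    show "\<forall>i\<ge>n. coeff f' i = 0"
    proof (intro allI impI)
      fix i assume "i \<ge> n"
      show "coeff f' i = 0"
      proof (cases "i = n")
        case True
        then have "i - (n - k) = k" using deg unfolding n_def k_def by simp
        then show ?thesis unfolding coef' using True H'k deg by (simp add: c_def n_def k_def)
      next
        case False
        then have "i > n" using \<open>i \<ge> n\<close> by simp
        then have "coeff f i = 0" unfolding n_def by (simp add: coeff_eq_0)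
        moreover have "i - (n - k) > k" using \<open>i > n\<close> deg unfolding n_def k_def by simp
        ultimately show ?thesis unfolding coef' using H'gt by simp
      qed
    qed
  qed
  then show ?thesis using f'I polyf' unfolding n_def by blast
qed

lemma chev_contra:
  fixes I V :: "'k::field set"
  assumes V: "subring V" and IV: "I \<subseteq> V"
    and I0: "0 \<in> I" and Iadd: "\<And>a b. a \<in> I \<Longrightarrow> b \<in> I \<Longrightarrow> a - b \<in> I"
    and Imul: "\<And>a r. a \<in> I \<Longrightarrow> r \<in> V \<Longrightarrow> r * a \<in> I"
    and I1: "1 \<notin> I"
    and Iinv: "\<And>b. b \<in> I \<Longrightarrow> inverse (1 - b) \<in> V"
    and y: "y \<noteq> 0"
  shows "\<not> ((\<exists>f. poly_over I f \<and> poly f y = 1) \<and> (\<exists>g. poly_over I g \<and> poly g (inverse y) = 1))"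
proof -
  have "\<forall>f g. poly_over I f \<and> poly f y = 1 \<and> poly_over I g \<and> poly g (inverse y) = 1 \<and> degree f + degree g = m \<longrightarrow> False" for m
  proof (induction m rule: less_induct)
    case (less m)
    show ?case
    proof (intro allI impI)
      fix f g assume h: "poly_over I f \<and> poly f y = 1 \<and> poly_over I g \<and> poly g (inverse y) = 1 \<and> degree f + degree g = m"
      show False
      proof (cases "degree g \<le> degree f")
        case True
        then obtain f' where "poly_over I f'" "poly f' y = 1" "degree f' < degree f"
          using chev_reduce[OF assms, of f g] h by blast
        moreover have "degree f' + degree g < m" using h \<open>degree f' < degree f\<close> by simp
        ultimately show False using less[of "degree f' + degree g", rule_format, of f' g] h by blast
      next
        case False
        have y': "inverse y \<noteq> 0" using y by simp
        obtain g' where "poly_over I g'" "poly g' (inverse y) = 1" "degree g' < degree g"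
          using chev_reduce[OF V IV I0 Iadd Imul I1 Iinv y', of g f] h False by auto
        moreover have "degree f + degree g' < m" using h \<open>degree g' < degree g\<close> by simp
        ultimately show False using less[of "degree f + degree g'", rule_format, of f g'] h by blast
      qed
    qed
  qed
  then show ?thesis by blast
qed

lemma exists_vring:
  fixes F :: "'k::field set" and x :: 'k
  assumes F: "subfield F" and x: "\<not> algebraic_over F x"
  shows "\<exists>V. vring V \<and> F \<subseteq> V \<and> x \<in> V \<and> inverse x \<notin> V"
proof -
  have FR: "subring F" using subfieldD(1)[OF F] .
  have x0: "x \<noteq> 0" using not_algebraic_nonzero[OF FR x] .
  define \<A> where "\<A> = {R. subring R \<and> F \<subseteq> R \<and> x \<in> R \<and> (\<forall>r\<in>R. x * r \<noteq> 1)}"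
  have R0: "polys_at F x \<in> \<A>"
  proof -
    have "\<forall>r\<in>polys_at F x. x * r \<noteq> 1"
    proof
      fix r assume "r \<in> polys_at F x"
      then obtain f where f: "poly_over F f" "r = poly f x" unfolding polys_at_def by blast
      define h where "h = pCons 0 f - 1"
      have p1: "poly_over F (pCons 0 f)" by (rule poly_over_pCons[OF FR subringD(1)[OF FR] f(1)])
      have p2: "poly_over F 1" using poly_over_const[OF FR subringD(2)[OF FR]] by (simp add: one_pCons)
      have "poly_over F h" unfolding h_def by (rule poly_over_diff[OF FR p1 p2])
      moreover have "coeff h 0 = -1" by (simp add: h_def)
      then have "h \<noteq> 0" by auto
      ultimately have "poly h x \<noteq> 0" using x not_algebraic_poly by blast
      then show "x * r \<noteq> 1" unfolding h_def f(2) by simp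
    qed
    moreover have "F \<subseteq> polys_at F x" using polys_at_const[OF FR] by blast
    ultimately show ?thesis unfolding \<A>_def using polys_at_subring[OF FR] polys_at_var[OF FR]
      by simp
  qed
  have "\<exists>M\<in>\<A>. \<forall>X\<in>\<A>. M \<subseteq> X \<longrightarrow> X = M"
  proof (rule subset_Zorn_nonempty)
    show "\<A> \<noteq> {}" using R0 by blast
  next
    fix \<C> assume C: "\<C> \<noteq> {}" "subset.chain \<A> \<C>"
    have CA: "\<C> \<subseteq> \<A>" and Cch: "\<And>X Y. X \<in> \<C> \<Longrightarrow> Y \<in> \<C> \<Longrightarrow> X \<subseteq> Y \<or> Y \<subseteq> X"
      using C(2) unfolding subset.chain_def by auto
    obtain R1 where R1: "R1 \<in> \<C>" using C(1) by blast
    have two: "\<exists>R\<in>\<C>. a \<in> R \<and> b \<in> R" if "a \<in> \<Union>\<C>" "b \<in> \<Union>\<C>" for a b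
      using that Cch by blast
    have sub: "subring (\<Union>\<C>)"
      unfolding subring_def
    proof (intro conjI ballI)
      show "0 \<in> \<Union>\<C>" "1 \<in> \<Union>\<C>" using R1 CA subringD unfolding \<A>_def by blast+
    next
      fix a b assume ab: "a \<in> \<Union>\<C>" "b \<in> \<Union>\<C>"
      then obtain R where R: "R \<in> \<C>" "a \<in> R" "b \<in> R" using two by blast
      then have "subring R" using CA unfolding \<A>_def by blast
      then show "a + b \<in> \<Union>\<C>" "a * b \<in> \<Union>\<C>" using R subringD by blast+
    next
      fix a assume "a \<in> \<Union>\<C>"
      then obtain R where R: "R \<in> \<C>" "a \<in> R" by blast
      then have "subring R" using CA unfolding \<A>_def by blast
      then show "- a \<in> \<Union>\<C>" using R subringD by blast
    qed
    have "F \<subseteq> \<Union>\<C>" "x \<in> \<Union>\<C>" using R1 CA unfolding \<A>_def by blast+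
    moreover have "\<forall>r\<in>\<Union>\<C>. x * r \<noteq> 1" using CA unfolding \<A>_def by blast
    ultimately show "\<Union>\<C> \<in> \<A>" using sub unfolding \<A>_def by blast
  qed
  then obtain V where VA: "V \<in> \<A>" and Vmax: "\<And>X. X \<in> \<A> \<Longrightarrow> V \<subseteq> X \<Longrightarrow> X = V" by blast
  have V: "subring V" "F \<subseteq> V" "x \<in> V" "\<And>r. r \<in> V \<Longrightarrow> x * r \<noteq> 1" using VA unfolding \<A>_def by blast+
  define I where "I = {x * r | r. r \<in> V}"
  have IV: "I \<subseteq> V" unfolding I_def using V(1,3) subringD(4) by blast
  have I0: "0 \<in> I" unfolding I_def using subringD(1)[OF V(1)] by force
  have Iadd: "a - b \<in> I" if ha: "a \<in> I" and hb: "b \<in> I" for a b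
  proof -
    obtain r s where "a = x * r" "b = x * s" "r \<in> V" "s \<in> V" using ha hb unfolding I_def by blast
    then have "a - b = x * (r - s)" "r - s \<in> V" using subringD(6)[OF V(1)] by (auto simp: algebra_simps)
    then show ?thesis unfolding I_def by blast
  qed
  have Imul: "r * a \<in> I" if ha: "a \<in> I" and hr: "r \<in> V" for a r
  proof -
    obtain s where "a = x * s" "s \<in> V" using ha unfolding I_def by blast
    then have "r * a = x * (r * s)" "r * s \<in> V" using subringD(4)[OF V(1)] hr by (auto simp: algebra_simps)
    then show ?thesis unfolding I_def by blast
  qed
  have I1: "1 \<notin> I" unfolding I_def using V(4) by force
  have Iinv: "inverse (1 - b) \<in> V" if hb: "b \<in> I" for b
  proof -
    obtain b' where b': "b = x * b'" "b' \<in> V" using hb unfolding I_def by blast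
    define V' where "V' = {r / (1 - x * c) | r c. r \<in> V \<and> c \<in> V}"
    have den: "1 - x * c \<noteq> 0" if "c \<in> V" for c using V(4)[OF that] by simp
    have VV': "V \<subseteq> V'" unfolding V'_def
    proof
      fix r assume "r \<in> V"
      then have "r = r / (1 - x * 0)" "(0::'k) \<in> V" using subringD(1)[OF V(1)] by auto
      then show "r \<in> {r / (1 - x * c) | r c. r \<in> V \<and> c \<in> V}" using \<open>r \<in> V\<close> by blast
    qed
    have mem: "r / (1 - x * c) \<in> V'" if "r \<in> V" "c \<in> V" for r c unfolding V'_def using that by blast
    have prodden: "(1 - x * c1) * (1 - x * c2) = 1 - x * (c1 + c2 - x * c1 * c2)" for c1 c2
      by (simp add: algebra_simps)
    have cl: "c1 + c2 - x * c1 * c2 \<in> V" if "c1 \<in> V" "c2 \<in> V" for c1 c2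
      by (intro subringD(6)[OF V(1)] subringD(3)[OF V(1)] subringD(4)[OF V(1)] that V(3))
    have sub': "subring V'"
      unfolding subring_def
    proof (intro conjI ballI)
      show "0 \<in> V'" "1 \<in> V'" using VV' subringD[OF V(1)] by blast+
    next
      fix a b assume "a \<in> V'" "b \<in> V'"
      then obtain r1 c1 r2 c2 where h: "a = r1 / (1 - x * c1)" "b = r2 / (1 - x * c2)"
        "r1 \<in> V" "c1 \<in> V" "r2 \<in> V" "c2 \<in> V" unfolding V'_def by blast
      have d1: "1 - x * c1 \<noteq> 0" "1 - x * c2 \<noteq> 0" using den h by auto
      have "a + b = (r1 * (1 - x * c2) + r2 * (1 - x * c1)) / (1 - x * (c1 + c2 - x * c1 * c2))"
        unfolding h prodden[symmetric] using d1 by (simp add: field_simps)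
      moreover have "r1 * (1 - x * c2) + r2 * (1 - x * c1) \<in> V"
        by (intro subringD(6)[OF V(1)] subringD(3)[OF V(1)] subringD(4)[OF V(1)] h V(3) subringD(2)[OF V(1)])
      ultimately show "a + b \<in> V'" using mem[OF _ cl[OF h(4) h(6)]] by simp
      have "a * b = (r1 * r2) / (1 - x * (c1 + c2 - x * c1 * c2))"
        unfolding h prodden[symmetric] using d1 by (simp add: field_simps)
      moreover have "r1 * r2 \<in> V" using h subringD(4)[OF V(1)] by blast
      ultimately show "a * b \<in> V'" using mem[OF _ cl[OF h(4) h(6)]] by simp
    next
      fix a assume "a \<in> V'"
      then obtain r1 c1 where h: "a = r1 / (1 - x * c1)" "r1 \<in> V" "c1 \<in> V" unfolding V'_def by blast
      have "- a = (- r1) / (1 - x * c1)" using h by simp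
      then show "- a \<in> V'" using mem[OF subringD(5)[OF V(1) h(2)] h(3)] by simp
    qed
    have nu: "\<forall>r\<in>V'. x * r \<noteq> 1"
    proof
      fix a assume "a \<in> V'"
      then obtain r1 c1 where h: "a = r1 / (1 - x * c1)" "r1 \<in> V" "c1 \<in> V" unfolding V'_def by blast
      show "x * a \<noteq> 1"
      proof
        assume "x * a = 1"
        then have "x * r1 = 1 - x * c1" using den[OF h(3)] h(1) by (simp add: field_simps)
        then have "x * (r1 + c1) = 1" by (simp add: algebra_simps)
        moreover have "r1 + c1 \<in> V" using h subringD(3)[OF V(1)] by blast
        ultimately show False using V(4) by blast
      qed
    qed
    have "V' \<in> \<A>" unfolding \<A>_def using sub' nu VV' V(2,3) by blast
    then have "V' = V" using Vmax VV' by blast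
    moreover have "inverse (1 - b) \<in> V'"
      using mem[OF subringD(2)[OF V(1)] b'(2)] b'(1) by (simp add: divide_inverse)
    ultimately show ?thesis by simp
  qed
  have ext: "\<exists>f. poly_over I f \<and> poly f y = 1" if hy: "y \<notin> V" for y
  proof -
    define W where "W = polys_at V y"
    have W: "subring W" unfolding W_def using polys_at_subring[OF V(1)] .
    have VW: "V \<subseteq> W" unfolding W_def using polys_at_const[OF V(1)] by blast
    have "y \<in> W" unfolding W_def using polys_at_var[OF V(1)] .
    then have "W \<noteq> V" using hy by blast
    then have "W \<notin> \<A>" using Vmax VW by blast
    then obtain r where r: "r \<in> W" "x * r = 1" unfolding \<A>_def using W VW V(2,3) by blast
    then obtain g where g: "poly_over V g" "r = poly g y" unfolding W_def polys_at_def by blast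
    have "poly_over I (smult x g)" using g(1) unfolding poly_over_def I_def by auto
    moreover have "poly (smult x g) y = 1" using r g by simp
    ultimately show ?thesis by blast
  qed
  have vr: "vring V" unfolding vring_def
  proof (intro conjI allI impI)
    show "subring V" using V(1) .
  next
    fix y :: 'k assume y: "y \<noteq> 0"
    show "y \<in> V \<or> inverse y \<in> V"
    proof (rule ccontr)
      assume "\<not> (y \<in> V \<or> inverse y \<in> V)"
      then have "(\<exists>f. poly_over I f \<and> poly f y = 1) \<and> (\<exists>g. poly_over I g \<and> poly g (inverse y) = 1)"
        using ext by blast
      then show False using chev_contra[OF V(1) IV I0 Iadd Imul I1 Iinv y] by blast
    qed
  qed
  have "inverse x \<notin> V" using V(4)[of "inverse x"] x0 by auto
  then show ?thesis using vr V(2,3) by blast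
qed


definition inm :: "'k::field set \<Rightarrow> 'k \<Rightarrow> bool" where
  "inm V z \<longleftrightarrow> z \<in> V \<and> (z = 0 \<or> inverse z \<notin> V)"

definition vunit :: "'k::field set \<Rightarrow> 'k \<Rightarrow> bool" where
  "vunit V u \<longleftrightarrow> u \<in> V \<and> u \<noteq> 0 \<and> inverse u \<in> V"

context
  fixes V :: "'k::field set"
  assumes V: "vring V"
begin

lemma VR: "subring V" using V unfolding vring_def by blast

lemma v_notin: "z \<notin> V \<Longrightarrow> z \<noteq> 0 \<and> inverse z \<in> V \<and> inm V (inverse z)"
proof -
  assume z: "z \<notin> V"
  then have z0: "z \<noteq> 0" using subringD(1)[OF VR] by auto
  then have "inverse z \<in> V" using V z unfolding vring_def by blast
  then show ?thesis using z z0 unfolding inm_def by simp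
qed

lemma v_dich: "z \<noteq> 0 \<Longrightarrow> z \<in> V \<or> inverse z \<in> V"
  using V unfolding vring_def by blast

lemma inm_V: "inm V z \<Longrightarrow> z \<in> V" unfolding inm_def by blast

lemma inm_0: "inm V 0" unfolding inm_def using subringD(1)[OF VR] by simp

lemma inm_mult: "inm V a \<Longrightarrow> r \<in> V \<Longrightarrow> inm V (r * a)"
proof -
  assume a: "inm V a" and r: "r \<in> V"
  have ra: "r * a \<in> V" using subringD(4)[OF VR r inm_V[OF a]] .
  show "inm V (r * a)"
  proof (cases "r * a = 0")
    case True then show ?thesis using inm_0 by (simp only: True)
  next
    case False
    then have "a \<noteq> 0" "r \<noteq> 0" by auto
    have "inverse (r * a) \<notin> V"
    proof
      assume "inverse (r * a) \<in> V"
      then have "r * inverse (r * a) \<in> V" using subringD(4)[OF VR r] by blast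
      moreover have "r * inverse (r * a) = inverse a" using \<open>r \<noteq> 0\<close> by (simp add: field_simps)
      ultimately have "inverse a \<in> V" by metis
      then show False using a \<open>a \<noteq> 0\<close> unfolding inm_def by simp
    qed
    then show ?thesis using ra unfolding inm_def by blast
  qed
qed

lemma inm_mult': "inm V a \<Longrightarrow> r \<in> V \<Longrightarrow> inm V (a * r)"
  using inm_mult by (simp add: mult.commute)

lemma inm_add: "inm V a \<Longrightarrow> inm V b \<Longrightarrow> inm V (a + b)"
proof -
  assume a: "inm V a" and b: "inm V b"
  show ?thesis
  proof (cases "a = 0 \<or> b = 0")
    case True then show ?thesis using a b by auto
  next
    case False
    then have a0: "a \<noteq> 0" and b0: "b \<noteq> 0" by auto
    have "b / a \<noteq> 0" using False by simp
    then consider "b / a \<in> V" | "inverse (b / a) \<in> V" using v_dich by blast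
    then show ?thesis
    proof cases
      case 1
      have "1 + b / a \<in> V" using subringD(3)[OF VR subringD(2)[OF VR] 1] .
      moreover have "a + b = a * (1 + b / a)" using a0 by (simp add: field_simps)
      ultimately show ?thesis using inm_mult'[OF a] by simp
    next
      case 2
      then have "a / b \<in> V" by simp
      then have "1 + a / b \<in> V" using subringD(3)[OF VR subringD(2)[OF VR]] by blast
      moreover have "a + b = b * (1 + a / b)" using b0 by (simp add: field_simps)
      ultimately show ?thesis using inm_mult'[OF b] by simp
    qed
  qed
qed

lemma inm_uminus: "inm V a \<Longrightarrow> inm V (- a)"
  using inm_mult[of a "-1"] subringD(5)[OF VR subringD(2)[OF VR]] by simp

lemma inm_diff: "inm V a \<Longrightarrow> inm V b \<Longrightarrow> inm V (a - b)"
  using inm_add[of a "- b"] inm_uminus[of b] by simp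

lemma inm_sum: "(\<And>i. i \<in> A \<Longrightarrow> inm V (f i)) \<Longrightarrow> inm V (sum f A)"
proof (induction A rule: infinite_finite_induct)
  case (infinite A) then show ?case using inm_0 by simp
next
  case empty then show ?case using inm_0 by simp
next
  case (insert a A) then show ?case using inm_add by simp
qed

lemma not_inm_1: "\<not> inm V 1"
  unfolding inm_def using subringD(2)[OF VR] by simp

lemma inm_power: "inm V a \<Longrightarrow> k \<ge> 1 \<Longrightarrow> inm V (a ^ k)"
proof (induction k)
  case 0 then show ?case by simp
next
  case (Suc k)
  show ?case
  proof (cases "k = 0")
    case True then show ?thesis using Suc by simp
  next
    case False
    then have "inm V (a ^ k)" using Suc by simp
    then show ?thesis using inm_mult[OF _ inm_V[OF Suc(2)]] by simp
  qed
qed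

lemma vunit_not_inm: "vunit V u \<Longrightarrow> \<not> inm V u"
  unfolding vunit_def inm_def by auto

lemma V_not_inm_unit: "z \<in> V \<Longrightarrow> z \<noteq> 0 \<Longrightarrow> \<not> inm V z \<Longrightarrow> vunit V z"
  unfolding vunit_def inm_def by auto

lemma vunit_mult: "vunit V u \<Longrightarrow> vunit V u' \<Longrightarrow> vunit V (u * u')"
  unfolding vunit_def using subringD(4)[OF VR] by (auto simp: mult.commute)

lemma vunit_inverse: "vunit V u \<Longrightarrow> vunit V (inverse u)"
  unfolding vunit_def by auto

lemma vunit_divide: "vunit V u \<Longrightarrow> vunit V u' \<Longrightarrow> vunit V (u / u')"
  using vunit_mult vunit_inverse by (simp add: divide_inverse)

lemma vunit_1: "vunit V 1" unfolding vunit_def using subringD(2)[OF VR] by simp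

lemma vunit_power: "vunit V u \<Longrightarrow> vunit V (u ^ n)"
proof (induction n)
  case 0 then show ?case using vunit_1 by simp
next
  case (Suc n) then show ?case using vunit_mult[of u "u ^ n"] by simp
qed

lemma v_min_exists:
  assumes "finite A" "A \<noteq> {}" "\<And>i. i \<in> A \<Longrightarrow> f i \<noteq> 0"
  shows "\<exists>i0\<in>A. \<forall>i\<in>A. f i / f i0 \<in> V"
  using assms
proof (induction A rule: finite_ne_induct)
  case (singleton a)
  then show ?case using subringD(2)[OF VR] by simp
next
  case (insert a A)
  then obtain i0 where i0: "i0 \<in> A" "\<forall>i\<in>A. f i / f i0 \<in> V" by auto
  have fa: "f a \<noteq> 0" "f i0 \<noteq> 0" using insert i0 by auto
  show ?case
  proof (cases "f a / f i0 \<in> V")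
    case True then show ?thesis using i0 by auto
  next
    case False
    then have inv: "f i0 / f a \<in> V" using v_notin[OF False] by simp
    have "\<forall>i\<in>insert a A. f i / f a \<in> V"
    proof
      fix i assume "i \<in> insert a A"
      then consider "i = a" | "i \<in> A" by blast
      then show "f i / f a \<in> V"
      proof cases
        case 1 then show ?thesis using fa subringD(2)[OF VR] by simp
      next
        case 2
        have eq: "f i / f a = (f i / f i0) * (f i0 / f a)" using fa by simp
        have "f i / f i0 \<in> V" using i0(2) 2 by blast
        then have "(f i / f i0) * (f i0 / f a) \<in> V" using subringD(4)[OF VR _ inv] by blast
        then show ?thesis unfolding eq .
      qed
    qed
    then show ?thesis by blast
  qed
qed

lemma v_sum_nonzero:
  assumes "finite A" "A \<noteq> {}" "\<And>i. i \<in> A \<Longrightarrow> f i \<noteq> 0"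
    and "\<And>i j. i \<in> A \<Longrightarrow> j \<in> A \<Longrightarrow> i \<noteq> j \<Longrightarrow> \<not> vunit V (f i / f j)"
  shows "sum f A \<noteq> 0"
proof
  assume s0: "sum f A = 0"
  have "\<exists>i0\<in>A. \<forall>i\<in>A. f i / f i0 \<in> V" by (rule v_min_exists[OF assms(1) assms(2) assms(3)])
  then obtain i0 where i0: "i0 \<in> A" "\<forall>i\<in>A. f i / f i0 \<in> V" by (elim bexE) simp
  have f0: "f i0 \<noteq> 0" using assms(3) i0(1) by blast
  have m: "inm V (f i / f i0)" if "i \<in> A - {i0}" for i
  proof (rule ccontr)
    assume "\<not> inm V (f i / f i0)"
    moreover have "f i / f i0 \<in> V" using i0(2) that by blast
    moreover have "f i / f i0 \<noteq> 0" using assms(3)[of i] that f0 by simp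
    ultimately have "vunit V (f i / f i0)" using V_not_inm_unit by blast
    moreover have "i \<in> A" "i \<noteq> i0" using that by auto
    ultimately show False using assms(4)[of i i0] i0(1) by blast
  qed
  define S where "S = (\<Sum>i\<in>A - {i0}. f i / f i0)"
  have "sum f A / f i0 = (\<Sum>i\<in>A. f i / f i0)" by (rule sum_divide_distrib)
  also have "\<dots> = f i0 / f i0 + S"
    unfolding S_def using assms(1) i0(1) by (rule sum.remove)
  also have "f i0 / f i0 = 1" using f0 by simp
  finally have "1 + S = 0" using s0 by simp
  then have e: "- S = 1" by (simp add: add_eq_0_iff2)
  have "inm V S" unfolding S_def by (rule inm_sum[of "A - {i0}" "\<lambda>i. f i / f i0"]) (rule m)
  then have "inm V (- S)" by (rule inm_uminus)
  then have "inm V 1" unfolding e .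
  then show False using not_inm_1 by blast
qed

end

lemma poly_over_reflect: "subring F \<Longrightarrow> poly_over F p \<Longrightarrow> poly_over F (reflect_poly p)"
  unfolding poly_over_def by (auto simp: coeff_reflect_poly subringD)

lemma algebraic_inverse:
  assumes "subring F" "algebraic_over F y" "y \<noteq> 0"
  shows "algebraic_over F (inverse y)"
proof -
  obtain f where f: "f \<noteq> 0" "poly_over F f" "poly f y = 0" using assms(2) unfolding algebraic_over_def by blast
  have "poly (reflect_poly f) (inverse y) = (inverse y) ^ degree f * poly f y"
    using poly_reflect_poly_nz[of "inverse y" f] assms(3) by simp
  then show ?thesis unfolding algebraic_over_def using f poly_over_reflect[OF assms(1) f(2)]
    by (intro exI[of _ "reflect_poly f"]) simp
qed

lemma poly_divmod_over:
  fixes F :: "'k::field set"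
  assumes F: "subfield F" and pi: "poly_over F \<pi>" "\<pi> \<noteq> 0"
  shows "poly_over F g \<Longrightarrow> \<exists>q r. poly_over F q \<and> poly_over F r \<and> g = \<pi> * q + r \<and> (r = 0 \<or> degree r < degree \<pi>)"
proof (induction "degree g" arbitrary: g rule: less_induct)
  case (less g)
  have FR: "subring F" using subfieldD(1)[OF F] .
  show ?case
  proof (cases "g = 0 \<or> degree g < degree \<pi>")
    case True
    then show ?thesis using less(2) poly_over_0[OF FR] by (intro exI[of _ 0] exI[of _ g]) auto
  next
    case False
    then have g0: "g \<noteq> 0" and dg: "degree \<pi> \<le> degree g" by auto
    define j where "j = degree g - degree \<pi>"
    define c where "c = lead_coeff g / lead_coeff \<pi>"
    have cF: "c \<in> F" unfolding c_def using less(2) pi(1) subfieldD(3)[OF F] unfolding poly_over_def by blast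
    define g' where "g' = g - monom c j * \<pi>"
    have g'F: "poly_over F g'" unfolding g'_def
      by (intro poly_over_diff[OF FR] less(2) poly_over_mult[OF FR] poly_over_monom[OF FR cF] pi(1))
    have cg: "coeff (monom c j * \<pi>) k = (if k < j then 0 else c * coeff \<pi> (k - j))" for k
      by (rule coeff_monom_mult)
    have hi: "coeff g' k = 0" if "k \<ge> degree g" for k
    proof (cases "k = degree g")
      case True
      then have "k - j = degree \<pi>" "\<not> k < j" using dg unfolding j_def by auto
      then have "coeff (monom c j * \<pi>) k = c * lead_coeff \<pi>" by (simp only: cg if_False)
      also have "\<dots> = lead_coeff g" using pi(2) by (simp add: c_def)
      finally show ?thesis unfolding g'_def using True by simp
    next
      case False
      then have "k > degree g" using that by simp
      then have "coeff g k = 0" "coeff \<pi> (k - j) = 0" using dg unfolding j_def by (auto intro!: coeff_eq_0)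
      then show ?thesis unfolding g'_def by (simp add: cg)
    qed
    show ?thesis
    proof (cases "g' = 0")
      case True
      then have "g = \<pi> * monom c j + 0" unfolding g'_def by (simp add: mult.commute)
      then show ?thesis using poly_over_monom[OF FR cF] poly_over_0[OF FR] by blast
    next
      case False
      have "degree g' < degree g"
      proof (rule degree_lessI)
        show "g' \<noteq> 0 \<or> 0 < degree g" using False by simp
        show "\<forall>k\<ge>degree g. coeff g' k = 0" using hi by blast
      qed
      then obtain q r where qr: "poly_over F q" "poly_over F r" "g' = \<pi> * q + r" "r = 0 \<or> degree r < degree \<pi>"
        using less(1)[OF _ g'F] by blast
      have "g = \<pi> * (q + monom c j) + r" using qr(3) unfolding g'_def by (simp add: algebra_simps)
      moreover have "poly_over F (q + monom c j)" by (intro poly_over_add[OF FR] qr(1) poly_over_monom[OF FR cF])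
      ultimately show ?thesis using qr by blast
    qed
  qed
qed


lemma poly_over_1: "subring F \<Longrightarrow> poly_over F 1"
  using poly_over_const[of F 1] subringD(2)[of F] by (simp add: one_pCons)

lemma poly_over_X: "subring F \<Longrightarrow> poly_over F [:0, 1:]"
  using poly_over_pCons[of F 0 "[:1:]"] poly_over_const[of F 1] subringD(1,2)[of F] by simp

lemma rff_mem: "poly_over F a \<Longrightarrow> poly_over F b \<Longrightarrow> poly b t \<noteq> 0 \<Longrightarrow> poly a t / poly b t \<in> rat_fun_field F t"
  unfolding rat_fun_field_def by blast

lemma rff_const: "subring F \<Longrightarrow> c \<in> F \<Longrightarrow> c \<in> rat_fun_field F t"
  using rff_mem[of F "[:c:]" 1 t] poly_over_const[of F c] poly_over_1[of F] by simp

lemma rff_var: "subring F \<Longrightarrow> t \<in> rat_fun_field F t"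
  using rff_mem[of F "[:0, 1:]" 1 t] poly_over_X[of F] poly_over_1[of F] by simp

lemma rff_subfield:
  assumes F: "subfield F" and t: "\<not> algebraic_over F t"
  shows "subfield (rat_fun_field F t)"
proof -
  have FR: "subring F" using subfieldD(1)[OF F] .
  let ?L = "rat_fun_field F t"
  have nz: "poly b t \<noteq> 0" if "poly_over F b" "b \<noteq> 0" for b using not_algebraic_poly[OF t that] .
  have add: "p + q \<in> ?L" if hp: "p \<in> ?L" and hq: "q \<in> ?L" for p q
  proof -
    obtain a b where ab: "poly_over F a" "poly_over F b" "poly b t \<noteq> 0" "p = poly a t / poly b t"
      using hp unfolding rat_fun_field_def by blast
    obtain c d where cd: "poly_over F c" "poly_over F d" "poly d t \<noteq> 0" "q = poly c t / poly d t"
      using hq unfolding rat_fun_field_def by blast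
    have "p + q = poly (a * d + c * b) t / poly (b * d) t" unfolding ab(4) cd(4) using ab(3) cd(3) by (simp add: field_simps)
    moreover have "poly (b * d) t \<noteq> 0" using ab cd by simp
    ultimately show ?thesis using rff_mem[of F "a * d + c * b" "b * d" t] ab cd
      by (simp add: poly_over_add[OF FR] poly_over_mult[OF FR])
  qed
  have mul: "p * q \<in> ?L" if hp: "p \<in> ?L" and hq: "q \<in> ?L" for p q
  proof -
    obtain a b where ab: "poly_over F a" "poly_over F b" "poly b t \<noteq> 0" "p = poly a t / poly b t"
      using hp unfolding rat_fun_field_def by blast
    obtain c d where cd: "poly_over F c" "poly_over F d" "poly d t \<noteq> 0" "q = poly c t / poly d t"
      using hq unfolding rat_fun_field_def by blast
    have "p * q = poly (a * c) t / poly (b * d) t" unfolding ab(4) cd(4) using ab(3) cd(3) by (simp add: field_simps)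
    moreover have "poly (b * d) t \<noteq> 0" using ab cd by simp
    ultimately show ?thesis using rff_mem[of F "a * c" "b * d" t] ab cd
      by (simp add: poly_over_mult[OF FR])
  qed
  have neg: "- p \<in> ?L" if hp: "p \<in> ?L" for p
  proof -
    obtain a b where ab: "poly_over F a" "poly_over F b" "poly b t \<noteq> 0" "p = poly a t / poly b t"
      using hp unfolding rat_fun_field_def by blast
    have "- p = poly (- a) t / poly b t" using ab by simp
    then show ?thesis using rff_mem[of F "- a" b t] ab poly_over_uminus[OF FR] by simp
  qed
  have inv: "inverse p \<in> ?L" if hp: "p \<in> ?L" for p
  proof -
    obtain a b where ab: "poly_over F a" "poly_over F b" "poly b t \<noteq> 0" "p = poly a t / poly b t"
      using hp unfolding rat_fun_field_def by blast
    show ?thesis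
    proof (cases "poly a t = 0")
      case True
      then have "inverse p = 0" using ab by simp
      then show ?thesis using rff_const[OF FR subringD(1)[OF FR]] by simp
    next
      case False
      then have "inverse p = poly b t / poly a t" using ab by simp
      then show ?thesis using rff_mem[of F b a t] ab False by simp
    qed
  qed
  have "0 \<in> ?L" "1 \<in> ?L" using rff_const[OF FR subringD(1)[OF FR]] rff_const[OF FR subringD(2)[OF FR]] by auto
  then show ?thesis unfolding subfield_def subring_def using add mul neg inv by simp
qed

lemma L_not_sub_V:
  assumes V: "vring V" and L: "subfield L" "finite_dim_over L" and x: "x \<in> V" "inverse x \<notin> V"
  shows "\<not> L \<subseteq> V"
proof
  assume LV: "L \<subseteq> V"
  have VR: "subring V" using VR[OF V] .
  obtain N where N: "\<And>y. \<exists>c. (\<forall>i\<le>N. c i \<in> L) \<and> (\<exists>i\<le>N. c i \<noteq> 0) \<and> (\<Sum>i\<le>N. c i * y ^ i) = 0"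
    using powers_dependent[OF L] by blast
  obtain c where c: "\<forall>i\<le>N. c i \<in> L" "\<exists>i\<le>N. c i \<noteq> 0" "(\<Sum>i\<le>N. c i * (inverse x) ^ i) = 0"
    using N by blast
  have x0: "x \<noteq> 0" using x subringD(1)[OF VR] by auto
  have xm: "inm V x" using x unfolding inm_def by simp
  define K where "K = {i. i \<le> N \<and> c i \<noteq> 0}"
  have Kf: "finite K" "K \<noteq> {}" unfolding K_def using c(2) by auto
  define k where "k = Max K"
  have kK: "k \<in> K" unfolding k_def using Kf by (rule Max_in)
  have kmax: "i \<le> k" if "i \<le> N" "c i \<noteq> 0" for i
    unfolding k_def using Kf(1) that K_def by (intro Max_ge) auto
  have kN: "k \<le> N" and ck: "c k \<noteq> 0" using kK unfolding K_def by auto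
  define T where "T i = c i / c k * x ^ k * inverse x ^ i" for i
  have sumT: "(\<Sum>i\<le>N. T i) = 0"
  proof -
    have "(\<Sum>i\<le>N. T i) = (x ^ k / c k) * (\<Sum>i\<le>N. c i * (inverse x) ^ i)"
      unfolding T_def sum_distrib_left by (intro sum.cong) (auto simp: field_simps)
    then show ?thesis using c(3) by simp
  qed
  have Tk: "T k = 1" unfolding T_def using ck x0 by (simp add: power_inverse field_simps)
  have Tm: "inm V (T i)" if "i \<in> {..N} - {k}" for i
  proof (cases "c i = 0")
    case True then show ?thesis unfolding T_def using inm_0[OF V] by simp
  next
    case False
    then have "i \<le> k" "i \<noteq> k" using kmax that by auto
    then have ik: "i < k" by simp
    have "x ^ k = x ^ (k - i) * x ^ i" using ik by (simp add: power_add[symmetric])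
    then have Teq: "T i = (c i / c k) * x ^ (k - i)" unfolding T_def using x0 by (simp add: power_inverse field_simps)
    have "c i / c k \<in> V" using LV c(1) kN that subfieldD(3)[OF L(1)] by auto
    moreover have "inm V (x ^ (k - i))" using inm_power[OF V xm] ik by simp
    ultimately show ?thesis unfolding Teq using inm_mult[OF V] by blast
  qed
  define S where "S = (\<Sum>i\<in>{..N} - {k}. T i)"
  have "(\<Sum>i\<le>N. T i) = T k + S" unfolding S_def using kN by (simp add: sum.remove)
  then have "1 + S = 0" using sumT Tk by simp
  then have e: "- S = 1" by (simp add: add_eq_0_iff2)
  have "inm V S" unfolding S_def by (rule inm_sum[OF V, of "{..N} - {k}" T]) (rule Tm)
  then have "inm V (- S)" by (rule inm_uminus[OF V])
  then have "inm V 1" unfolding e .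
  then show False using not_inm_1[OF V] by blast
qed

lemma s_exists:
  assumes V: "vring V" "F \<subseteq> V" and F: "subfield F" and t: "\<not> algebraic_over F t"
  shows "\<exists>s. s \<in> V \<and> \<not> algebraic_over F s \<and>
    (\<forall>l\<in>rat_fun_field F t. \<exists>a b. poly_over F a \<and> poly_over F b \<and> poly b s \<noteq> 0 \<and> l = poly a s / poly b s)"
proof (cases "t \<in> V")
  case True
  then show ?thesis using t unfolding rat_fun_field_def by blast
next
  case False
  have FR: "subring F" using subfieldD(1)[OF F] .
  define s where "s = inverse t"
  have t0: "t \<noteq> 0" using not_algebraic_nonzero[OF FR t] .
  have s0: "s \<noteq> 0" unfolding s_def using t0 by simp
  have sV: "s \<in> V" unfolding s_def using v_notin[OF V(1) False] by blast
  have salg: "\<not> algebraic_over F s"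
  proof
    assume "algebraic_over F s"
    then have "algebraic_over F (inverse s)" using algebraic_inverse[OF FR _ s0] by blast
    then show False using t unfolding s_def by simp
  qed
  have conv: "poly p t = poly (reflect_poly p) s / s ^ degree p" for p
    using poly_reflect_poly_nz[OF s0, of p] s0 unfolding s_def by (simp add: field_simps)
  have rep: "\<exists>a b. poly_over F a \<and> poly_over F b \<and> poly b s \<noteq> 0 \<and> l = poly a s / poly b s"
    if hl: "l \<in> rat_fun_field F t" for l
  proof -
    obtain a b where ab: "poly_over F a" "poly_over F b" "poly b t \<noteq> 0" "l = poly a t / poly b t"
      using hl unfolding rat_fun_field_def by blast
    define a' where "a' = reflect_poly a * monom 1 (degree b)"
    define b' where "b' = reflect_poly b * monom 1 (degree a)"
    have pa': "poly a' s = poly (reflect_poly a) s * s ^ degree b" unfolding a'_def by (simp add: poly_monom)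
    have pb': "poly b' s = poly (reflect_poly b) s * s ^ degree a" unfolding b'_def by (simp add: poly_monom)
    have rb: "poly (reflect_poly b) s \<noteq> 0" using ab(3) conv[of b] by auto
    have "l = poly a' s / poly b' s" unfolding ab(4) pa' pb' conv[of a] conv[of b] using s0 rb
      by (simp add: field_simps)
    moreover have "poly b' s \<noteq> 0" unfolding pb' using rb s0 by simp
    moreover have "poly_over F a'" "poly_over F b'" unfolding a'_def b'_def
      using ab(1,2) by (auto intro!: poly_over_mult[OF FR] poly_over_reflect[OF FR] poly_over_monom[OF FR] subringD(2)[OF FR])
    ultimately show ?thesis by blast
  qed
  show ?thesis using sV salg rep by blast
qed

lemma pi_exists:
  assumes V: "vring V" "F \<subseteq> V" and F: "subfield F" and s: "s \<in> V" "\<not> algebraic_over F s"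
    and ex: "\<exists>f. poly_over F f \<and> f \<noteq> 0 \<and> inm V (poly f s)"
  shows "\<exists>\<pi>. poly_over F \<pi> \<and> \<pi> \<noteq> 0 \<and> inm V (poly \<pi> s) \<and>
     (\<forall>g. poly_over F g \<and> g \<noteq> 0 \<longrightarrow> (\<exists>k u. vunit V u \<and> poly g s = poly \<pi> s ^ k * u))"
proof -
  have FR: "subring F" using subfieldD(1)[OF F] .
  have VR': "subring V" using VR[OF V(1)] .
  define P where "P = {f. poly_over F f \<and> f \<noteq> 0 \<and> inm V (poly f s)}"
  define n0 where "n0 = (LEAST n. \<exists>f\<in>P. degree f = n)"
  have "\<exists>n. \<exists>f\<in>P. degree f = n" using ex unfolding P_def by blast
  then have "\<exists>f\<in>P. degree f = n0" unfolding n0_def by (rule LeastI_ex)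
  then obtain \<pi> where pi: "\<pi> \<in> P" "degree \<pi> = n0" by blast
  have pimin: "degree \<pi> \<le> degree f" if "f \<in> P" for f
    unfolding pi(2) n0_def using that by (intro Least_le) blast
  have piF: "poly_over F \<pi>" and pi0: "\<pi> \<noteq> 0" and pim: "inm V (poly \<pi> s)" using pi(1) unfolding P_def by auto
  have polyV: "poly g s \<in> V" if "poly_over F g" for g
    using subring_poly[OF VR' poly_over_mono[OF that V(2)] s(1)] .
  have unitF: "vunit V c" if "c \<in> F" "c \<noteq> 0" for c
    unfolding vunit_def using that V(2) subfieldD(2)[OF F] by auto
  have dpi: "degree \<pi> \<ge> 1"
  proof (rule ccontr)
    assume "\<not> degree \<pi> \<ge> 1"
    then have "degree \<pi> = 0" by simp
    then have "\<pi> = [:coeff \<pi> 0:]" by (rule degree_0_id[symmetric])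
    then have "poly \<pi> s = coeff \<pi> 0" "coeff \<pi> 0 \<noteq> 0" using pi0 by (metis poly_const_conv, metis pCons_0_0)
    moreover have "coeff \<pi> 0 \<in> F" using piF unfolding poly_over_def by blast
    ultimately show False using unitF vunit_not_inm[OF V(1)] pim by metis
  qed
  have fact: "poly_over F g \<Longrightarrow> g \<noteq> 0 \<Longrightarrow> \<exists>k u. vunit V u \<and> poly g s = poly \<pi> s ^ k * u" for g
  proof (induction "degree g" arbitrary: g rule: less_induct)
    case (less g)
    have gs0: "poly g s \<noteq> 0" using not_algebraic_poly[OF s(2) less(2,3)] .
    show ?case
    proof (cases "inm V (poly g s)")
      case False
      then have "vunit V (poly g s)" using V_not_inm_unit[OF V(1) polyV[OF less(2)] gs0] by blast
      then show ?thesis by (intro exI[of _ 0] exI[of _ "poly g s"]) simp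
    next
      case True
      obtain q r where qr: "poly_over F q" "poly_over F r" "g = \<pi> * q + r" "r = 0 \<or> degree r < degree \<pi>"
        using poly_divmod_over[OF F piF pi0 less(2)] by blast
      have "poly r s = poly g s - poly \<pi> s * poly q s" using qr(3) by simp
      moreover have "inm V (poly \<pi> s * poly q s)" using inm_mult'[OF V(1) pim polyV[OF qr(1)]] .
      ultimately have rm: "inm V (poly r s)" using inm_diff[OF V(1) True] by simp
      have r0: "r = 0"
      proof (rule ccontr)
        assume "r \<noteq> 0"
        then have "r \<in> P" unfolding P_def using qr(2) rm by simp
        then show False using pimin qr(4) \<open>r \<noteq> 0\<close> by fastforce
      qed
      then have g: "g = \<pi> * q" using qr(3) by simp
      then have q0: "q \<noteq> 0" using less(3) by auto
      have "degree g = degree \<pi> + degree q" unfolding g using pi0 q0 by (rule degree_mult_eq)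
      then have "degree q < degree g" using dpi by simp
      then obtain k u where "vunit V u" "poly q s = poly \<pi> s ^ k * u" using less(1)[OF _ qr(1) q0] by blast
      then show ?thesis unfolding g by (intro exI[of _ "Suc k"] exI[of _ u]) simp
    qed
  qed
  show ?thesis using piF pi0 pim fact by blast
qed


lemma dval_normalize:
  fixes w :: "'k::field \<Rightarrow> int"
  assumes wm: "\<And>y z. y \<noteq> 0 \<Longrightarrow> z \<noteq> 0 \<Longrightarrow> w (y * z) = w y + w z"
    and wu: "\<And>y z. y \<noteq> 0 \<Longrightarrow> z \<noteq> 0 \<Longrightarrow> y + z \<noteq> 0 \<Longrightarrow> min (w y) (w z) \<le> w (y + z)"
    and x: "x \<noteq> 0" "w x > 0"
  shows "\<exists>v. dval v \<and> v x > 0"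
proof -
  have w1: "w 1 = 0" using wm[of 1 1] by simp
  have winv: "w (inverse y) = - w y" if "y \<noteq> 0" for y
    using wm[of y "inverse y"] that w1 by simp
  have wpow: "w (y ^ n) = int n * w y" if "y \<noteq> 0" for y n
    using that by (induction n) (auto simp: w1 wm algebra_simps)
  define g where "g = (LEAST n::nat. n > 0 \<and> (\<exists>y. y \<noteq> 0 \<and> w y = int n))"
  have ex: "\<exists>n::nat. n > 0 \<and> (\<exists>y. y \<noteq> 0 \<and> w y = int n)"
    using x by (intro exI[of _ "nat (w x)"]) auto
  have gprop: "g > 0 \<and> (\<exists>y. y \<noteq> 0 \<and> w y = int g)" unfolding g_def by (rule LeastI_ex[OF ex])
  have gmin: "g \<le> n" if "n > 0" "\<exists>y. y \<noteq> 0 \<and> w y = int n" for n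
    unfolding g_def using that by (intro Least_le) blast
  obtain y0 where y0: "y0 \<noteq> 0" "w y0 = int g" using gprop by blast
  have g0: "g > 0" using gprop by blast
  have mult_in: "\<exists>y. y \<noteq> 0 \<and> w y = m * int g" for m :: int
  proof (cases "m \<ge> 0")
    case True
    then show ?thesis using y0 wpow[of y0 "nat m"] by (intro exI[of _ "y0 ^ nat m"]) simp
  next
    case False
    have "w (inverse y0 ^ nat (- m)) = int (nat (- m)) * (- int g)"
      using wpow[of "inverse y0" "nat (- m)"] winv[OF y0(1)] y0 by simp
    then show ?thesis using False y0(1) by (intro exI[of _ "inverse y0 ^ nat (- m)"]) simp
  qed
  have gdvd: "int g dvd w y" if "y \<noteq> 0" for y
  proof -
    define r where "r = w y mod int g"
    obtain z where z: "z \<noteq> 0" "w z = (- (w y div int g)) * int g" using mult_in by blast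
    have "w (y * z) = w y - (w y div int g) * int g" using wm[OF that z(1)] z(2) by simp
    then have "w (y * z) = r" unfolding r_def using minus_div_mult_eq_mod[of "w y" "int g"] by simp
    moreover have "r \<ge> 0" "r < int g" unfolding r_def using g0 by auto
    moreover have "y * z \<noteq> 0" using that z by simp
    ultimately have "r = 0"
    proof -
      assume h: "w (y * z) = r" "r \<ge> 0" "r < int g" "y * z \<noteq> 0"
      show "r = 0"
      proof (rule ccontr)
        assume "r \<noteq> 0"
        then have "nat r > 0" using h by simp
        moreover have "\<exists>y. y \<noteq> 0 \<and> w y = int (nat r)" using h by (intro exI[of _ "y * z"]) simp
        ultimately have "g \<le> nat r" using gmin by blast
        then show False using h by simp
      qed
    qed
    then show ?thesis unfolding r_def by (simp add: dvd_eq_mod_eq_0)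
  qed
  define v where "v y = (if y = 0 then 0 else w y div int g)" for y
  have dv: "dval v" unfolding dval_def
  proof (intro conjI allI impI)
    show "v 0 = 0" unfolding v_def by simp
  next
    fix a b :: 'k assume ab: "a \<noteq> 0" "b \<noteq> 0"
    obtain a' where a': "w a = int g * a'" using gdvd[OF ab(1)] by (auto elim: dvdE)
    obtain b' where b': "w b = int g * b'" using gdvd[OF ab(2)] by (auto elim: dvdE)
    have "w (a * b) = int g * (a' + b')" using wm[OF ab] a' b' by (simp add: algebra_simps)
    then show "v (a * b) = v a + v b" unfolding v_def using ab a' b' g0 by simp
  next
    fix a b :: 'k assume ab: "a \<noteq> 0" "b \<noteq> 0" "a + b \<noteq> 0"
    have m: "min (w a) (w b) \<le> w (a + b)" using wu[OF ab] .
    have "w a div int g \<le> w (a + b) div int g \<or> w b div int g \<le> w (a + b) div int g"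
    proof (cases "w a \<le> w b")
      case True
      then have "w a \<le> w (a + b)" using m by simp
      then show ?thesis using g0 by (simp add: zdiv_mono1)
    next
      case False
      then have "w b \<le> w (a + b)" using m by simp
      then show ?thesis using g0 by (simp add: zdiv_mono1)
    qed
    then show "min (v a) (v b) \<le> v (a + b)" unfolding v_def using ab by auto
  next
    fix n :: int
    obtain y where y: "y \<noteq> 0" "w y = n * int g" using mult_in by blast
    then have "v y = n" unfolding v_def using g0 by simp
    then show "\<exists>x. x \<noteq> 0 \<and> v x = n" using y(1) by blast
  qed
  obtain a where a: "w x = int g * a" using gdvd[OF x(1)] by (auto elim: dvdE)
  then have "a > 0" using x(2) g0 by (simp add: zero_less_mult_iff)
  then have "v x > 0" unfolding v_def using x(1) a g0 by simp
  then show ?thesis using dv by blast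
qed

context
  fixes V :: "'k::field set" and \<pi>0 :: 'k and N :: nat
  assumes V: "vring V" and pim: "inm V \<pi>0" "\<pi>0 \<noteq> 0"
    and rep: "\<And>y. y \<noteq> 0 \<Longrightarrow> \<exists>j. 1 \<le> j \<and> j \<le> N \<and> (\<exists>k1 k2 u. vunit V u \<and> y ^ j * \<pi>0 ^ k2 = \<pi>0 ^ k1 * u)"
begin

definition vrep :: "'k \<Rightarrow> nat \<Rightarrow> nat \<Rightarrow> bool" where
  "vrep y k1 k2 \<longleftrightarrow> (\<exists>u. vunit V u \<and> y ^ fact N * \<pi>0 ^ k2 = \<pi>0 ^ k1 * u)"

lemma M_pos: "fact N \<ge> (1::nat)" by simp

lemma vrep_exists: "y \<noteq> 0 \<Longrightarrow> \<exists>k1 k2. vrep y k1 k2"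
proof -
  assume y: "y \<noteq> 0"
  obtain j k1 k2 u where j: "1 \<le> j" "j \<le> N" "vunit V u" "y ^ j * \<pi>0 ^ k2 = \<pi>0 ^ k1 * u"
    using rep[OF y] by blast
  obtain e where e: "fact N = j * e" using dvd_fact[OF j(1,2)] by (auto elim: dvdE)
  have "(y ^ j * \<pi>0 ^ k2) ^ e = (\<pi>0 ^ k1 * u) ^ e" using j(4) by simp
  then have "y ^ fact N * \<pi>0 ^ (k2 * e) = \<pi>0 ^ (k1 * e) * u ^ e"
    unfolding e by (simp add: power_mult power_mult_distrib)
  moreover have "vunit V (u ^ e)" using vunit_power[OF V j(3)] .
  ultimately show ?thesis unfolding vrep_def by blast
qed

lemma pi_pow_unit_eq:
  assumes "vunit V u" "vunit V u'" "\<pi>0 ^ a * u = \<pi>0 ^ b * u'"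
  shows "a = b"
proof (rule ccontr)
  assume ne: "a \<noteq> b"
  have gen: "False" if lt: "a' < b'" and uu: "vunit V u1" "vunit V u2" and eq: "\<pi>0 ^ a' * u1 = \<pi>0 ^ b' * u2" for a' b' u1 u2
  proof -
    have "\<pi>0 ^ b' = \<pi>0 ^ a' * \<pi>0 ^ (b' - a')" using lt by (simp add: power_add[symmetric])
    then have "u1 = \<pi>0 ^ (b' - a') * u2" using eq pim(2) by (simp add: mult.assoc)
    moreover have "inm V (\<pi>0 ^ (b' - a') * u2)"
      using inm_mult'[OF V inm_power[OF V pim(1)] VR[OF V, THEN subringD(1)]] uu(2) lt
      by (metis inm_mult' inm_power V pim(1) vunit_def One_nat_def Suc_leI zero_less_diff)
    ultimately show False using vunit_not_inm[OF V uu(1)] by simp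
  qed
  show False
  proof (cases "a < b")
    case True show False by (rule gen[OF True assms(1,2,3)])
  next
    case False
    then have "b < a" using ne by simp
    moreover have "\<pi>0 ^ b * u' = \<pi>0 ^ a * u" using assms(3) by simp
    ultimately show False by (rule gen[OF _ assms(2,1)])
  qed
qed

lemma vrep_unique:
  assumes "vrep y k1 k2" "vrep y l1 l2"
  shows "int k1 - int k2 = int l1 - int l2"
proof -
  obtain u where u: "vunit V u" "y ^ fact N * \<pi>0 ^ k2 = \<pi>0 ^ k1 * u" using assms(1) unfolding vrep_def by blast
  obtain u' where u': "vunit V u'" "y ^ fact N * \<pi>0 ^ l2 = \<pi>0 ^ l1 * u'" using assms(2) unfolding vrep_def by blast
  have "\<pi>0 ^ (k1 + l2) * u = (y ^ fact N * \<pi>0 ^ k2) * \<pi>0 ^ l2" using u(2) by (simp add: power_add algebra_simps)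
  also have "\<dots> = (y ^ fact N * \<pi>0 ^ l2) * \<pi>0 ^ k2" by (simp add: algebra_simps)
  also have "\<dots> = \<pi>0 ^ (l1 + k2) * u'" using u'(2) by (simp add: power_add algebra_simps)
  finally have "k1 + l2 = l1 + k2" using pi_pow_unit_eq[OF u(1) u'(1)] by blast
  then show ?thesis by simp
qed

definition wv :: "'k \<Rightarrow> int" where
  "wv y = (if y = 0 then 0 else (SOME z. \<exists>k1 k2. vrep y k1 k2 \<and> z = int k1 - int k2))"

lemma wv_eq: "y \<noteq> 0 \<Longrightarrow> vrep y k1 k2 \<Longrightarrow> wv y = int k1 - int k2"
proof -
  assume y: "y \<noteq> 0" and r: "vrep y k1 k2"
  have "\<exists>k1 k2. vrep y k1 k2 \<and> (SOME z. \<exists>k1 k2. vrep y k1 k2 \<and> z = int k1 - int k2) = int k1 - int k2"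
    using r by (intro someI_ex[of "\<lambda>z. \<exists>k1 k2. vrep y k1 k2 \<and> z = int k1 - int k2"]) blast
  then obtain l1 l2 where "vrep y l1 l2" "(SOME z. \<exists>k1 k2. vrep y k1 k2 \<and> z = int k1 - int k2) = int l1 - int l2"
    by blast
  then show ?thesis unfolding wv_def using y vrep_unique[OF r] by simp
qed

lemma vrep_mult: "vrep y k1 k2 \<Longrightarrow> vrep z l1 l2 \<Longrightarrow> vrep (y * z) (k1 + l1) (k2 + l2)"
proof -
  assume a: "vrep y k1 k2" "vrep z l1 l2"
  obtain u where u: "vunit V u" "y ^ fact N * \<pi>0 ^ k2 = \<pi>0 ^ k1 * u" using a(1) unfolding vrep_def by blast
  obtain u' where u': "vunit V u'" "z ^ fact N * \<pi>0 ^ l2 = \<pi>0 ^ l1 * u'" using a(2) unfolding vrep_def by blast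
  have "(y * z) ^ fact N * \<pi>0 ^ (k2 + l2) = (y ^ fact N * \<pi>0 ^ k2) * (z ^ fact N * \<pi>0 ^ l2)"
    by (simp add: power_add power_mult_distrib algebra_simps)
  also have "\<dots> = \<pi>0 ^ (k1 + l1) * (u * u')" unfolding u(2) u'(2) by (simp add: power_add algebra_simps)
  finally show ?thesis unfolding vrep_def using vunit_mult[OF V u(1) u'(1)] by blast
qed

lemma vrep_inverse: "y \<noteq> 0 \<Longrightarrow> vrep y k1 k2 \<Longrightarrow> vrep (inverse y) k2 k1"
proof -
  assume y: "y \<noteq> 0" and a: "vrep y k1 k2"
  obtain u where u: "vunit V u" "y ^ fact N * \<pi>0 ^ k2 = \<pi>0 ^ k1 * u" using a unfolding vrep_def by blast
  have u0: "u \<noteq> 0" using u(1) unfolding vunit_def by blast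
  have "inverse y ^ fact N * \<pi>0 ^ k1 = \<pi>0 ^ k2 * inverse u"
    using u(2) y u0 pim(2) by (simp add: power_inverse field_simps)
  then show ?thesis unfolding vrep_def using vunit_inverse[OF V u(1)] by blast
qed

lemma wv_mult: "y \<noteq> 0 \<Longrightarrow> z \<noteq> 0 \<Longrightarrow> wv (y * z) = wv y + wv z"
proof -
  assume yz: "y \<noteq> 0" "z \<noteq> 0"
  obtain k1 k2 l1 l2 where r: "vrep y k1 k2" "vrep z l1 l2" using vrep_exists yz by blast
  show ?thesis using wv_eq[OF yz(1) r(1)] wv_eq[OF yz(2) r(2)] wv_eq[of "y * z", OF _ vrep_mult[OF r]] yz by simp
qed

lemma wv_inverse: "y \<noteq> 0 \<Longrightarrow> wv (inverse y) = - wv y"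
proof -
  assume y: "y \<noteq> 0"
  obtain k1 k2 where r: "vrep y k1 k2" using vrep_exists y by blast
  show ?thesis using wv_eq[OF y r] wv_eq[of "inverse y", OF _ vrep_inverse[OF y r]] y by simp
qed

lemma wv_nonneg_iff: "y \<noteq> 0 \<Longrightarrow> y \<in> V \<longleftrightarrow> wv y \<ge> 0"
proof -
  assume y: "y \<noteq> 0"
  obtain k1 k2 where r: "vrep y k1 k2" using vrep_exists y by blast
  obtain u where u: "vunit V u" "y ^ fact N * \<pi>0 ^ k2 = \<pi>0 ^ k1 * u" using r unfolding vrep_def by blast
  have wy: "wv y = int k1 - int k2" using wv_eq[OF y r] .
  have VR': "subring V" using VR[OF V] .
  show ?thesis
  proof
    assume yV: "y \<in> V"
    show "wv y \<ge> 0"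
    proof (rule ccontr)
      assume "\<not> wv y \<ge> 0"
      then have lt: "k1 < k2" using wy by simp
      have "\<pi>0 ^ k2 = \<pi>0 ^ k1 * \<pi>0 ^ (k2 - k1)" using lt by (simp add: power_add[symmetric])
      then have "y ^ fact N * \<pi>0 ^ (k2 - k1) = u" using u(2) pim(2) by (simp add: algebra_simps)
      moreover have "inm V (y ^ fact N * \<pi>0 ^ (k2 - k1))"
        using inm_mult[OF V inm_power[OF V pim(1)] subring_power[OF VR' yV]] lt by simp
      ultimately show False using vunit_not_inm[OF V u(1)] by simp
    qed
  next
    assume "wv y \<ge> 0"
    then have le: "k2 \<le> k1" using wy by simp
    have "\<pi>0 ^ k1 = \<pi>0 ^ k2 * \<pi>0 ^ (k1 - k2)" using le by (simp add: power_add[symmetric])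
    then have yM: "y ^ fact N = \<pi>0 ^ (k1 - k2) * u" using u(2) pim(2) by (simp add: algebra_simps)
    have yMV: "y ^ fact N \<in> V" unfolding yM
      using subringD(4)[OF VR' subring_power[OF VR' inm_V[OF V pim(1)]]] u(1) unfolding vunit_def by blast
    show "y \<in> V"
    proof (rule ccontr)
      assume "y \<notin> V"
      then have "inm V (inverse y)" using v_notin[OF V] by blast
      then have "inm V (inverse y ^ fact N)" using inm_power[OF V] M_pos by blast
      then have "inm V (y ^ fact N * inverse y ^ fact N)" using inm_mult[OF V _ yMV] by blast
      moreover have "y ^ fact N * inverse y ^ fact N = 1" using y by (simp add: power_inverse)
      ultimately show False using not_inm_1[OF V] by simp
    qed
  qed
qed

lemma wv_ultra: "y \<noteq> 0 \<Longrightarrow> z \<noteq> 0 \<Longrightarrow> y + z \<noteq> 0 \<Longrightarrow> min (wv y) (wv z) \<le> wv (y + z)"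
proof -
  assume yz: "y \<noteq> 0" "z \<noteq> 0" "y + z \<noteq> 0"
  have VR': "subring V" using VR[OF V] .
  have gen: "wv a \<le> wv (a + b)" if ab: "a \<noteq> 0" "b \<noteq> 0" "a + b \<noteq> 0" "b / a \<in> V" for a b
  proof -
    have e: "a + b = a * (1 + b / a)" using ab(1) by (simp add: field_simps)
    have n: "1 + b / a \<noteq> 0" using e ab(3) by auto
    have "1 + b / a \<in> V" using subringD(3)[OF VR' subringD(2)[OF VR'] ab(4)] .
    then have "wv (1 + b / a) \<ge> 0" using wv_nonneg_iff[OF n] by blast
    then show ?thesis unfolding e using wv_mult[OF ab(1) n] by simp
  qed
  have "z / y \<noteq> 0" using yz by simp
  then consider "z / y \<in> V" | "inverse (z / y) \<in> V" using v_dich[OF V] by blast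
  then show ?thesis
  proof cases
    case 1 then show ?thesis using gen[OF yz 1] by simp
  next
    case 2
    then have "y / z \<in> V" by simp
    then show ?thesis using gen[of z y] yz by (simp add: add.commute)
  qed
qed

lemma wv_pos: "inm V x \<Longrightarrow> x \<noteq> 0 \<Longrightarrow> wv x > 0"
proof -
  assume xm: "inm V x" and x0: "x \<noteq> 0"
  have "wv x \<ge> 0" using wv_nonneg_iff[OF x0] inm_V[OF V xm] by blast
  moreover have "wv x \<noteq> 0"
  proof
    assume "wv x = 0"
    then have "wv (inverse x) \<ge> 0" using wv_inverse[OF x0] by simp
    then have "inverse x \<in> V" using wv_nonneg_iff[of "inverse x"] x0 by simp
    then show False using xm x0 unfolding inm_def by simp
  qed
  ultimately show ?thesis by simp
qed

lemma dval_from_vring: "inm V x \<Longrightarrow> x \<noteq> 0 \<Longrightarrow> \<exists>v. dval v \<and> v x > 0"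
  using dval_normalize[of wv x] wv_mult wv_ultra wv_pos by blast

end


lemma exists_dval_pos:
  fixes t x :: "'k::field"
  assumes t: "\<not> algebraic_over prime_subfield t" "finite_dim_over (rat_fun_field prime_subfield t)"
    and x: "\<not> algebraic_over prime_subfield x"
  shows "\<exists>v. dval v \<and> v x > 0"
proof -
  let ?F = "prime_subfield :: 'k set"
  have F: "subfield ?F" by (rule Fp_subfield)
  have FR: "subring ?F" using subfieldD(1)[OF F] .
  obtain V where V: "vring V" "?F \<subseteq> V" "x \<in> V" "inverse x \<notin> V" using exists_vring[OF F x] by blast
  have VR': "subring V" using VR[OF V(1)] .
  define L where "L = rat_fun_field ?F t"
  have L: "subfield L" unfolding L_def by (rule rff_subfield[OF F t(1)])
  have LV: "\<not> L \<subseteq> V" using L_not_sub_V[OF V(1) L t(2)[folded L_def] V(3,4)] .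
  obtain s where s: "s \<in> V" "\<not> algebraic_over ?F s"
    and srep: "\<And>l. l \<in> L \<Longrightarrow> \<exists>a b. poly_over ?F a \<and> poly_over ?F b \<and> poly b s \<noteq> 0 \<and> l = poly a s / poly b s"
    using s_exists[OF V(1,2) F t(1)] unfolding L_def by blast
  have polyV: "poly g s \<in> V" if "poly_over ?F g" for g
    using subring_poly[OF VR' poly_over_mono[OF that V(2)] s(1)] .
  have ex: "\<exists>f. poly_over ?F f \<and> f \<noteq> 0 \<and> inm V (poly f s)"
  proof -
    obtain l where l: "l \<in> L" "l \<notin> V" using LV by blast
    obtain a b where ab: "poly_over ?F a" "poly_over ?F b" "poly b s \<noteq> 0" "l = poly a s / poly b s"
      using srep[OF l(1)] by blast
    have il: "inm V (inverse l)" using v_notin[OF V(1) l(2)] by blast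
    have l0: "l \<noteq> 0" using v_notin[OF V(1) l(2)] by blast
    then have a0: "poly a s \<noteq> 0" using ab(4) by auto
    have "poly b s = poly a s * inverse l" using ab(3,4) a0 l0 by (simp add: field_simps)
    moreover have "inm V (poly a s * inverse l)" using inm_mult[OF V(1) il polyV[OF ab(1)]] .
    ultimately have "inm V (poly b s)" by simp
    moreover have "b \<noteq> 0" using ab(3) by auto
    ultimately show ?thesis using ab(2) by blast
  qed
  obtain \<pi> where pi: "poly_over ?F \<pi>" "\<pi> \<noteq> 0" "inm V (poly \<pi> s)"
    and pifact: "\<And>g. poly_over ?F g \<Longrightarrow> g \<noteq> 0 \<Longrightarrow> \<exists>k u. vunit V u \<and> poly g s = poly \<pi> s ^ k * u"
    using pi_exists[OF V(1,2) F s ex] by blast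
  define \<pi>0 where "\<pi>0 = poly \<pi> s"
  have pi00: "\<pi>0 \<noteq> 0" unfolding \<pi>0_def using not_algebraic_poly[OF s(2) pi(1,2)] .
  have pim: "inm V \<pi>0" unfolding \<pi>0_def using pi(3) .
  have Lrep: "\<exists>k1 k2 u. vunit V u \<and> l * \<pi>0 ^ k2 = \<pi>0 ^ k1 * u" if hl: "l \<in> L" "l \<noteq> 0" for l
  proof -
    obtain a b where ab: "poly_over ?F a" "poly_over ?F b" "poly b s \<noteq> 0" "l = poly a s / poly b s"
      using srep[OF hl(1)] by blast
    have a0: "a \<noteq> 0" and b0: "b \<noteq> 0" using ab(3,4) hl(2) by auto
    obtain k1 u1 where k1: "vunit V u1" "poly a s = \<pi>0 ^ k1 * u1" using pifact[OF ab(1) a0] unfolding \<pi>0_def by blast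
    obtain k2 u2 where k2: "vunit V u2" "poly b s = \<pi>0 ^ k2 * u2" using pifact[OF ab(2) b0] unfolding \<pi>0_def by blast
    have u20: "u2 \<noteq> 0" using k2(1) unfolding vunit_def by blast
    have "l * \<pi>0 ^ k2 = \<pi>0 ^ k1 * (u1 / u2)" unfolding ab(4) k1(2) k2(2) using u20 pi00 by (simp add: field_simps)
    then show ?thesis using vunit_divide[OF V(1) k1(1) k2(1)] by blast
  qed
  obtain N where N: "\<And>y. \<exists>c. (\<forall>i\<le>N. c i \<in> L) \<and> (\<exists>i\<le>N. c i \<noteq> 0) \<and> (\<Sum>i\<le>N. c i * y ^ i) = 0"
    using powers_dependent[OF L t(2)[folded L_def]] by blast
  have rep: "\<exists>j. 1 \<le> j \<and> j \<le> N \<and> (\<exists>k1 k2 u. vunit V u \<and> y ^ j * \<pi>0 ^ k2 = \<pi>0 ^ k1 * u)"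
    if y0: "y \<noteq> 0" for y
  proof -
    obtain c where c: "\<forall>i\<le>N. c i \<in> L" "\<exists>i\<le>N. c i \<noteq> 0" "(\<Sum>i\<le>N. c i * y ^ i) = 0" using N by blast
    define A where "A = {i. i \<le> N \<and> c i \<noteq> 0}"
    define T where "T i = c i * y ^ i" for i
    have Af: "finite A" "A \<noteq> {}" unfolding A_def using c(2) by auto
    have T0: "T i \<noteq> 0" if "i \<in> A" for i using that y0 unfolding A_def T_def by simp
    have "sum T A = (\<Sum>i\<le>N. c i * y ^ i)" unfolding T_def A_def
      by (rule sum.mono_neutral_left) auto
    then have sA: "sum T A = 0" using c(3) by simp
    have "\<exists>i\<in>A. \<exists>j\<in>A. i \<noteq> j \<and> vunit V (T i / T j)"
    proof (rule ccontr)
      assume "\<not> (\<exists>i\<in>A. \<exists>j\<in>A. i \<noteq> j \<and> vunit V (T i / T j))"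
      then have nu: "\<And>i j. i \<in> A \<Longrightarrow> j \<in> A \<Longrightarrow> i \<noteq> j \<Longrightarrow> \<not> vunit V (T i / T j)" by blast
      have "sum T A \<noteq> 0" by (rule v_sum_nonzero[of V A T, OF V(1) Af(1) Af(2) T0 nu])
      then show False using sA by simp
    qed
    then obtain i j where ij: "i \<in> A" "j \<in> A" "j < i" "vunit V (T i / T j)"
    proof -
      assume r: "\<And>i j. i \<in> A \<Longrightarrow> j \<in> A \<Longrightarrow> j < i \<Longrightarrow> vunit V (T i / T j) \<Longrightarrow> thesis"
      obtain i j where "i \<in> A" "j \<in> A" "i \<noteq> j" "vunit V (T i / T j)" using \<open>\<exists>i\<in>A. \<exists>j\<in>A. _\<close> by blast
      then show thesis
      proof (cases "j < i")
        case True then show ?thesis using r \<open>i \<in> A\<close> \<open>j \<in> A\<close> \<open>vunit V (T i / T j)\<close> by blast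
      next
        case False
        then have "i < j" using \<open>i \<noteq> j\<close> by simp
        moreover have "vunit V (T j / T i)" using vunit_inverse[OF V(1) \<open>vunit V (T i / T j)\<close>] by simp
        ultimately show ?thesis using r \<open>i \<in> A\<close> \<open>j \<in> A\<close> by blast
      qed
    qed
    have ci: "c i \<noteq> 0" "c j \<noteq> 0" "c i \<in> L" "c j \<in> L" using ij(1,2) c(1) unfolding A_def by auto
    have "c j / c i \<in> L" using subfieldD(3)[OF L ci(4) ci(3)] .
    moreover have "c j / c i \<noteq> 0" using ci by simp
    ultimately obtain k1 k2 u where ku: "vunit V u" "(c j / c i) * \<pi>0 ^ k2 = \<pi>0 ^ k1 * u" using Lrep by blast
    have "y ^ i = y ^ j * y ^ (i - j)" using ij(3) by (simp add: power_add[symmetric])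
    then have Te: "T i / T j = (c i / c j) * y ^ (i - j)" unfolding T_def using y0 ci by (simp add: field_simps)
    have yeq: "y ^ (i - j) = (T i / T j) * (c j / c i)" unfolding Te using ci by (simp add: field_simps)
    have "y ^ (i - j) * \<pi>0 ^ k2 = (T i / T j) * ((c j / c i) * \<pi>0 ^ k2)" unfolding yeq by (simp only: mult.assoc)
    also have "\<dots> = (T i / T j) * (\<pi>0 ^ k1 * u)" unfolding ku(2) ..
    also have "\<dots> = \<pi>0 ^ k1 * ((T i / T j) * u)" by (simp only: ac_simps)
    finally have "y ^ (i - j) * \<pi>0 ^ k2 = \<pi>0 ^ k1 * ((T i / T j) * u)" .
    moreover have "vunit V ((T i / T j) * u)" using vunit_mult[OF V(1) ij(4) ku(1)] .
    moreover have "1 \<le> i - j" "i - j \<le> N" using ij(1,3) unfolding A_def by auto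
    ultimately show ?thesis by blast
  qed
  have xm: "inm V x" using V(3,4) unfolding inm_def by simp
  have x0: "x \<noteq> 0" using V(3,4) by auto
  show ?thesis using dval_from_vring[OF V(1) pim pi00 rep xm x0] by blast
qed


lemma gff_data:
  assumes "global_function_field TYPE('k::field)"
  obtains p t where "prime p" "of_nat p = (0::'k)" "\<not> algebraic_over (prime_subfield::'k set) t"
    "finite_dim_over (rat_fun_field (prime_subfield::'k set) t)"
  using assms unfolding global_function_field_def by blast

lemma Fp_finite_gff:
  assumes "global_function_field TYPE('k::field)"
  shows "finite (prime_subfield :: 'k set)"
proof -
  obtain p :: nat where "prime p" "of_nat p = (0::'k)" using gff_data[OF assms] by metis
  then show ?thesis using Fp_finite[of p] prime_gt_0_nat by blast
qed

lemma dval_Fp: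
  assumes fin: "finite (prime_subfield :: 'k::field set)" and v: "dval v"
    and a: "a \<in> (prime_subfield :: 'k set)" "a \<noteq> 0"
  shows "v a = 0"
proof -
  have "range (\<lambda>n::nat. a ^ n) \<subseteq> prime_subfield"
    using subring_power[OF Fp_subring a(1)] by blast
  then have "finite (range (\<lambda>n::nat. a ^ n))" using fin finite_subset by blast
  then have "\<not> inj (\<lambda>n::nat. a ^ n)" using finite_imageD[of "\<lambda>n::nat. a ^ n" UNIV] by auto
  then obtain i j :: nat where ij: "i \<noteq> j" "a ^ i = a ^ j" unfolding inj_def by blast
  have gen: "v a = 0" if lt: "i' < j'" and eq: "a ^ i' = a ^ j'" for i' j' :: nat
  proof -
    have "a ^ j' = a ^ i' * a ^ (j' - i')" using lt by (simp add: power_add[symmetric])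
    then have "a ^ (j' - i') = 1" using eq a(2) by simp
    then have "int (j' - i') * v a = 0" using dval_power[OF v a(2), of "j' - i'"] dval_1[OF v] by simp
    then show ?thesis using lt by simp
  qed
  show ?thesis
  proof (cases "i < j")
    case True then show ?thesis using gen ij(2) by blast
  next
    case False then have "j < i" using ij(1) by simp
    then show ?thesis using gen ij(2) by metis
  qed
qed

lemma dval_const0:
  assumes fin: "finite (prime_subfield :: 'k::field set)" and v: "dval v"
    and c: "c \<in> (constant_field :: 'k set)" "c \<noteq> 0"
  shows "v c = 0"
proof -
  obtain f where f: "f \<noteq> 0" "poly_over prime_subfield f" "poly f c = 0"
    using c(1) unfolding constant_field_def algebraic_over_def by blast
  define a where "a i = coeff f i * c ^ i" for i
  have psum: "poly f c = (\<Sum>i\<le>degree f. a i)" unfolding a_def by (rule poly_altdef)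
  have va: "v (a i) = int i * v c" if "coeff f i \<noteq> 0" for i
  proof -
    have "v (coeff f i) = 0" using dval_Fp[OF fin v _ that] f(2) unfolding poly_over_def by blast
    then show ?thesis unfolding a_def using dvalD(2)[OF v that] dval_power[OF v c(2)] c(2) by simp
  qed
  have a0: "a i = 0 \<longleftrightarrow> coeff f i = 0" for i unfolding a_def using c(2) by simp
  show ?thesis
  proof (rule ccontr)
    assume "v c \<noteq> 0"
    then consider "v c < 0" | "v c > 0" by linarith
    then show False
    proof cases
      case 1
      define j where "j = degree f"
      have cj: "coeff f j \<noteq> 0" unfolding j_def using f(1) by simp
      have "(\<Sum>i\<le>degree f. a i) \<noteq> 0"
      proof (rule conjunct1[OF dval_sum_strict[OF v]])
        show "finite {..degree f}" by simp
        show "j \<in> {..degree f}" unfolding j_def by simp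
        show "a j \<noteq> 0" using cj a0 by simp
        fix i assume i: "i \<in> {..degree f}" "i \<noteq> j"
        show "a i = 0 \<or> v (a j) < v (a i)"
        proof (cases "coeff f i = 0")
          case True then show ?thesis using a0 by simp
        next
          case False
          have "i < j" using i unfolding j_def by simp
          then have "int j * v c < int i * v c" using 1 by (simp add: mult_strict_right_mono_neg)
          then show ?thesis using va[OF False] va[OF cj] by simp
        qed
      qed
      then show False using psum f(3) by simp
    next
      case 2
      define j where "j = (LEAST i. coeff f i \<noteq> 0)"
      have ex: "\<exists>i. coeff f i \<noteq> 0" using f(1) by (metis leading_coeff_0_iff)
      have cj: "coeff f j \<noteq> 0" unfolding j_def using LeastI_ex[OF ex] .
      have jmin: "j \<le> i" if "coeff f i \<noteq> 0" for i unfolding j_def using that by (rule Least_le)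
      have jd: "j \<le> degree f" using cj le_degree by blast
      have "(\<Sum>i\<le>degree f. a i) \<noteq> 0"
      proof (rule conjunct1[OF dval_sum_strict[OF v]])
        show "finite {..degree f}" by simp
        show "j \<in> {..degree f}" using jd by simp
        show "a j \<noteq> 0" using cj a0 by simp
        fix i assume i: "i \<in> {..degree f}" "i \<noteq> j"
        show "a i = 0 \<or> v (a j) < v (a i)"
        proof (cases "coeff f i = 0")
          case True then show ?thesis using a0 by simp
        next
          case False
          have "j < i" using jmin[OF False] i by simp
          then have "int j * v c < int i * v c" using 2 by (simp add: mult_strict_right_mono)
          then show ?thesis using va[OF False] va[OF cj] by simp
        qed
      qed
      then show False using psum f(3) by simp
    qed
  qed
qed

lemma zero_const: "0 \<in> (constant_field :: 'k::field set)"
  unfolding constant_field_def algebraic_over_def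
  using poly_over_X[OF Fp_subring] by (intro CollectI exI[of _ "[:0, 1:]"]) simp

lemma Fp_sub_C: "(prime_subfield :: 'k::field set) \<subseteq> constant_field"
proof
  fix a :: 'k assume a: "a \<in> prime_subfield"
  have "poly_over prime_subfield [:- a, 1:]"
    using poly_over_pCons[OF Fp_subring subringD(5)[OF Fp_subring a] poly_over_const[OF Fp_subring subringD(2)[OF Fp_subring]]] .
  then show "a \<in> constant_field" unfolding constant_field_def algebraic_over_def
    by (intro CollectI exI[of _ "[:- a, 1:]"]) simp
qed

lemma const_char:
  assumes K: "global_function_field TYPE('k::field)"
  shows "c \<in> (constant_field :: 'k set) \<longleftrightarrow> (\<forall>v. dval v \<longrightarrow> c = 0 \<or> v c \<ge> 0)"
proof
  assume "c \<in> constant_field"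
  then show "\<forall>v. dval v \<longrightarrow> c = 0 \<or> v c \<ge> 0" using dval_const0[OF Fp_finite_gff[OF K]] by fastforce
next
  assume h: "\<forall>v. dval v \<longrightarrow> c = 0 \<or> v c \<ge> 0"
  show "c \<in> constant_field"
  proof (rule ccontr)
    assume nc: "c \<notin> constant_field"
    then have c0: "c \<noteq> 0" using zero_const by blast
    have "\<not> algebraic_over prime_subfield (inverse c)"
    proof
      assume "algebraic_over prime_subfield (inverse c)"
      moreover have "inverse c \<noteq> 0" using c0 by simp
      ultimately have "algebraic_over prime_subfield (inverse (inverse c))"
        by (rule algebraic_inverse[OF Fp_subring])
      then show False using nc unfolding constant_field_def by simp
    qed
    moreover obtain p t where t: "\<not> algebraic_over (prime_subfield::'k set) t"
      "finite_dim_over (rat_fun_field (prime_subfield::'k set) t)" using gff_data[OF K] by metis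
    ultimately obtain v where v: "dval v" "v (inverse c) > 0" using exists_dval_pos by blast
    then have "v c < 0" using dval_inverse[OF v(1) c0] by simp
    then show False using h v(1) c0 by fastforce
  qed
qed

lemma C_subfield:
  assumes K: "global_function_field TYPE('k::field)"
  shows "subfield (constant_field :: 'k set)"
proof -
  let ?C = "constant_field :: 'k set"
  have ch: "\<And>c. c \<in> ?C \<longleftrightarrow> (\<forall>v. dval v \<longrightarrow> c = 0 \<or> v c \<ge> 0)" using const_char[OF K] .
  have v0: "\<And>v c. dval v \<Longrightarrow> c \<in> ?C \<Longrightarrow> c \<noteq> 0 \<Longrightarrow> v c = 0" using dval_const0[OF Fp_finite_gff[OF K]] .
  have add: "a + b \<in> ?C" if "a \<in> ?C" "b \<in> ?C" for a b
    unfolding ch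
  proof (intro allI impI)
    fix v :: "'k \<Rightarrow> int" assume v: "dval v"
    show "a + b = 0 \<or> v (a + b) \<ge> 0"
    proof (cases "a = 0 \<or> b = 0 \<or> a + b = 0")
      case True then show ?thesis using that ch v by auto
    next
      case False
      then show ?thesis using dvalD(3)[OF v, of a b] v0[OF v] that by force
    qed
  qed
  have mul: "a * b \<in> ?C" if "a \<in> ?C" "b \<in> ?C" for a b
    unfolding ch
  proof (intro allI impI)
    fix v :: "'k \<Rightarrow> int" assume v: "dval v"
    show "a * b = 0 \<or> v (a * b) \<ge> 0"
    proof (cases "a = 0 \<or> b = 0")
      case True then show ?thesis by auto
    next
      case False
      then show ?thesis using dvalD(2)[OF v, of a b] v0[OF v] that by force
    qed
  qed
  have neg: "- a \<in> ?C" if "a \<in> ?C" for a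
    using that unfolding ch using dval_uminus by fastforce
  have inv: "inverse a \<in> ?C" if "a \<in> ?C" for a
  proof (cases "a = 0")
    case True then show ?thesis using zero_const by simp
  next
    case False
    show ?thesis unfolding ch using dval_inverse[of _ a] v0[OF _ that False] False by fastforce
  qed
  have "1 \<in> ?C" using Fp_sub_C Fp_of_int[of 1] by force
  then show ?thesis unfolding subfield_def subring_def using zero_const add mul neg inv by simp
qed


lemma finite_polys_bounded:
  assumes "finite F"
  shows "finite {f. poly_over F f \<and> degree f \<le> N}"
proof -
  have "{f. poly_over F f \<and> degree f \<le> N} \<subseteq> Poly ` {xs. set xs \<subseteq> F \<and> length xs = Suc N}"
  proof
    fix f assume f: "f \<in> {f. poly_over F f \<and> degree f \<le> N}"
    have "f = Poly (map (coeff f) [0..<Suc N])"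
    proof (rule poly_eqI)
      fix i
      show "coeff f i = coeff (Poly (map (coeff f) [0..<Suc N])) i"
      proof (cases "i < Suc N")
        case True then show ?thesis by (simp add: nth_default_def del: upt_Suc)
      next
        case False
        then have "coeff f i = 0" using f by (intro coeff_eq_0) auto
        then show ?thesis using False by (simp add: nth_default_def)
      qed
    qed
    moreover have "map (coeff f) [0..<Suc N] \<in> {xs. set xs \<subseteq> F \<and> length xs = Suc N}"
      using f unfolding poly_over_def by (auto simp del: upt_Suc)
    ultimately show "f \<in> Poly ` {xs. set xs \<subseteq> F \<and> length xs = Suc N}" by (rule image_eqI)
  qed
  moreover have "finite (Poly ` {xs. set xs \<subseteq> F \<and> length xs = Suc N})"
    using finite_lists_length_eq[OF assms] by blast
  ultimately show ?thesis by (rule finite_subset)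
qed

lemma poly_sum_upto:
  fixes g :: "'a::comm_ring_1 poly"
  assumes "degree g \<le> K"
  shows "poly g x = (\<Sum>k\<le>K. coeff g k * x ^ k)"
proof -
  have "poly g x = (\<Sum>k\<le>degree g. coeff g k * x ^ k)" by (rule poly_altdef)
  also have "\<dots> = (\<Sum>k\<le>K. coeff g k * x ^ k)"
    by (rule sum.mono_neutral_left) (use assms in \<open>auto simp: coeff_eq_0\<close>)
  finally show ?thesis .
qed

lemma C_finite:
  assumes K: "global_function_field TYPE('k::field)"
  shows "finite (constant_field :: 'k set)"
proof (rule ccontr)
  assume inf: "infinite (constant_field :: 'k set)"
  let ?F = "prime_subfield :: 'k set"
  let ?C = "constant_field :: 'k set"
  obtain p t where t: "\<not> algebraic_over ?F t" "finite_dim_over (rat_fun_field ?F t)" using gff_data[OF K] by metis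
  have Ffin: "finite ?F" using Fp_finite_gff[OF K] .
  have FR: "subring ?F" by (rule Fp_subring)
  have C: "subfield ?C" using C_subfield[OF K] .
  have CR: "subring ?C" using subfieldD(1)[OF C] .
  define L where "L = rat_fun_field ?F t"
  have L: "subfield L" unfolding L_def by (rule rff_subfield[OF Fp_subfield t(1)])
  obtain N where N: "\<And>y. \<exists>c. (\<forall>i\<le>N. c i \<in> L) \<and> (\<exists>i\<le>N. c i \<noteq> 0) \<and> (\<Sum>i\<le>N. c i * y ^ i) = 0"
    using powers_dependent[OF L t(2)[folded L_def]] by blast
  obtain v where v: "dval v" "v t > 0" using exists_dval_pos[OF t t(1)] by blast
  have t0: "t \<noteq> 0" using v dvalD(1)[OF v(1)] by auto
  define Pset where "Pset = {f. poly_over ?F f \<and> degree f \<le> N}"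
  have Pfin: "finite Pset" unfolding Pset_def by (rule finite_polys_bounded[OF Ffin])
  define D where "D = (\<Union>f\<in>Pset - {0}. {x. poly f x = 0})"
  have Dfin: "finite D" unfolding D_def using Pfin poly_roots_finite by blast
  have "infinite (?C - D)" using inf Dfin by (rule Diff_infinite_finite[rotated])
  then obtain c where c: "c \<in> ?C" "c \<notin> D" by (metis Diff_iff finite.emptyI ex_in_conv)
  have cD: "poly h c \<noteq> 0" if "poly_over ?F h" "degree h \<le> N" "h \<noteq> 0" for h
    using c(2) that unfolding D_def Pset_def by blast
  obtain r where r: "\<forall>i\<le>N. r i \<in> L" "\<exists>i\<le>N. r i \<noteq> 0" "(\<Sum>i\<le>N. r i * c ^ i) = 0" using N by blast
  have "\<forall>i\<le>N. \<exists>a b. poly_over ?F a \<and> poly_over ?F b \<and> poly b t \<noteq> 0 \<and> r i = poly a t / poly b t"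
    using r(1) unfolding L_def rat_fun_field_def by blast
  then obtain a b where ab: "\<And>i. i \<le> N \<Longrightarrow> poly_over ?F (a i) \<and> poly_over ?F (b i) \<and> poly (b i) t \<noteq> 0 \<and> r i = poly (a i) t / poly (b i) t"
    by metis
  define g where "g i = a i * (\<Prod>j\<in>{..N} - {i}. b j)" for i
  define B where "B = (\<Prod>j\<le>N. poly (b j) t)"
  have B0: "B \<noteq> 0" unfolding B_def using ab by simp
  have gF: "poly_over ?F (g i)" if "i \<le> N" for i
    unfolding g_def using ab that by (intro poly_over_mult[OF FR] poly_over_prod[OF FR]) auto
  have pg: "poly (g i) t = r i * B" if "i \<le> N" for i
  proof -
    have "B = poly (b i) t * (\<Prod>j\<in>{..N} - {i}. poly (b j) t)"
      unfolding B_def using that by (simp add: prod.remove)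
    then show ?thesis unfolding g_def using ab[OF that] by (simp add: poly_prod)
  qed
  define Kd where "Kd = (\<Sum>i\<le>N. degree (g i))"
  have dgK: "degree (g i) \<le> Kd" if "i \<le> N" for i
    unfolding Kd_def using that by (intro member_le_sum) auto
  define e where "e k = (\<Sum>i\<le>N. coeff (g i) k * c ^ i)" for k
  have sum0: "(\<Sum>k\<le>Kd. t ^ k * e k) = 0"
  proof -
    have "(\<Sum>k\<le>Kd. t ^ k * e k) = (\<Sum>i\<le>N. (\<Sum>k\<le>Kd. coeff (g i) k * t ^ k) * c ^ i)"
      unfolding e_def sum_distrib_left sum_distrib_right
      by (subst sum.swap) (simp add: algebra_simps)
    also have "\<dots> = (\<Sum>i\<le>N. poly (g i) t * c ^ i)"
      by (intro sum.cong refl) (simp add: poly_sum_upto[OF dgK])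
    also have "\<dots> = B * (\<Sum>i\<le>N. r i * c ^ i)"
      unfolding sum_distrib_left by (intro sum.cong refl) (simp add: pg)
    finally show ?thesis using r(3) by simp
  qed
  have eC: "e k \<in> ?C" for k
    unfolding e_def using gF Fp_sub_C c(1)
    by (intro subring_sum[OF CR] subringD(4)[OF CR] subring_power[OF CR]) (auto simp: poly_over_def)
  define h where "h k = (\<Sum>i\<le>N. monom (coeff (g i) k) i)" for k
  have coeffh: "coeff (h k) m = (if m \<le> N then coeff (g m) k else 0)" for k m
    unfolding h_def by (simp add: coeff_sum coeff_monom)
  have ph: "poly (h k) c = e k" for k
    unfolding h_def e_def by (simp add: poly_sum poly_monom)
  obtain i1 where i1: "i1 \<le> N" "r i1 \<noteq> 0" using r(2) by blast
  have g1: "g i1 \<noteq> 0" using pg[OF i1(1)] i1(2) B0 by auto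
  define k1 where "k1 = degree (g i1)"
  have k1K: "k1 \<le> Kd" unfolding k1_def using dgK[OF i1(1)] .
  have "coeff (h k1) i1 \<noteq> 0" unfolding coeffh k1_def using i1(1) g1 by simp
  then have h1: "h k1 \<noteq> 0" by auto
  have hF: "poly_over ?F (h k)" for k
    unfolding h_def using gF by (intro poly_over_sum[OF FR] poly_over_monom[OF FR]) (auto simp: poly_over_def)
  have hd: "degree (h k) \<le> N" for k by (rule degree_le) (simp add: coeffh)
  have e1: "e k1 \<noteq> 0" using cD[OF hF hd h1] ph by simp
  define k0 where "k0 = (LEAST k. e k \<noteq> 0)"
  have ek0: "e k0 \<noteq> 0" unfolding k0_def using e1 by (rule LeastI)
  have k0min: "k0 \<le> k" if "e k \<noteq> 0" for k unfolding k0_def using that by (rule Least_le)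
  have k0K: "k0 \<le> Kd" using k0min[OF e1] k1K by simp
  have vterm: "v (t ^ k * e k) = int k * v t" if "e k \<noteq> 0" for k
    using dvalD(2)[OF v(1), of "t ^ k" "e k"] dval_power[OF v(1) t0] dval_const0[OF Ffin v(1) eC that] t0 that
    by simp
  have "(\<Sum>k\<le>Kd. t ^ k * e k) \<noteq> 0"
  proof (rule conjunct1[OF dval_sum_strict[OF v(1)]])
    show "finite {..Kd}" by simp
    show "k0 \<in> {..Kd}" using k0K by simp
    show "t ^ k0 * e k0 \<noteq> 0" using t0 ek0 by simp
    fix k assume k: "k \<in> {..Kd}" "k \<noteq> k0"
    show "t ^ k * e k = 0 \<or> v (t ^ k0 * e k0) < v (t ^ k * e k)"
    proof (cases "e k = 0")
      case True then show ?thesis by simp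
    next
      case False
      then have "k0 < k" using k0min[OF False] k(2) by simp
      then have "int k0 * v t < int k * v t" using v(2) by (simp add: mult_strict_right_mono)
      then show ?thesis using vterm[OF False] vterm[OF ek0] by simp
    qed
  qed
  then show False using sum0 by simp
qed


section \<open>Growth of polynomials at poles\<close>

lemma poly_dval_grow:
  assumes v: "dval v" and cf: "\<And>i. coeff f i = 0 \<or> v (coeff f i) \<ge> 0"
    and lc: "lead_coeff f \<noteq> 0" "v (lead_coeff f) = 0" and w: "w \<noteq> 0" "v w < 0"
  shows "poly f w \<noteq> 0 \<and> v (poly f w) = int (degree f) * v w"
proof -
  define a where "a i = coeff f i * w ^ i" for i
  have psum: "poly f w = (\<Sum>i\<le>degree f. a i)" unfolding a_def by (rule poly_altdef)
  have va: "v (a i) = v (coeff f i) + int i * v w" if "coeff f i \<noteq> 0" for i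
    unfolding a_def using dvalD(2)[OF v that, of "w ^ i"] dval_power[OF v w(1)] w(1) by simp
  have aj: "a (degree f) \<noteq> 0" "v (a (degree f)) = int (degree f) * v w"
    using lc va[OF lc(1)] w(1) unfolding a_def by auto
  have "(\<Sum>i\<le>degree f. a i) \<noteq> 0 \<and> v (\<Sum>i\<le>degree f. a i) = v (a (degree f))"
  proof (rule dval_sum_strict[OF v])
    show "finite {..degree f}" by simp
    show "degree f \<in> {..degree f}" by simp
    show "a (degree f) \<noteq> 0" using aj(1) .
    fix i assume i: "i \<in> {..degree f}" "i \<noteq> degree f"
    show "a i = 0 \<or> v (a (degree f)) < v (a i)"
    proof (cases "coeff f i = 0")
      case True then show ?thesis unfolding a_def by simp
    next
      case False
      have "i < degree f" using i by simp
      then have "int (degree f) * v w < int i * v w" using w(2) by (simp add: mult_strict_right_mono_neg)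
      moreover have "v (coeff f i) \<ge> 0" using cf[of i] False by simp
      ultimately show ?thesis using va[OF False] aj(2) by simp
    qed
  qed
  then show ?thesis using psum aj(2) by simp
qed

lemma poly_dval_iter:
  assumes v: "dval v" and cf: "\<And>i. coeff f i = 0 \<or> v (coeff f i) \<ge> 0"
    and lc: "lead_coeff f \<noteq> 0" "v (lead_coeff f) = 0" and w: "w \<noteq> 0" "v w < 0"
  shows "(poly f ^^ n) w \<noteq> 0 \<and> v ((poly f ^^ n) w) = int (degree f) ^ n * v w"
proof (induction n)
  case 0 then show ?case using w by simp
next
  case (Suc n)
  show ?case
  proof (cases "degree f = 0")
    case True
    have "poly f ((poly f ^^ n) w) = lead_coeff f" using True by (metis degree_0_id poly_const_conv)
    then show ?thesis using lc True by simp
  next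
    case False
    have neg: "v ((poly f ^^ n) w) < 0"
    proof -
      have "int (degree f) ^ n > 0" using False by simp
      then show ?thesis using Suc w(2) by (simp add: mult_pos_neg)
    qed
    have "poly f ((poly f ^^ n) w) \<noteq> 0 \<and> v (poly f ((poly f ^^ n) w)) = int (degree f) * v ((poly f ^^ n) w)"
      by (rule poly_dval_grow[OF v cf lc]) (use Suc neg in auto)
    then show ?thesis using Suc by (simp add: algebra_simps)
  qed
qed

lemma poly_dval_iter_inj:
  assumes v: "dval v" and cf: "\<And>i. coeff f i = 0 \<or> v (coeff f i) \<ge> 0"
    and lc: "lead_coeff f \<noteq> 0" "v (lead_coeff f) = 0" and w: "w \<noteq> 0" "v w < 0"
    and d: "degree f \<ge> 2"
  shows "inj (\<lambda>n. (poly f ^^ n) w)"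
proof (rule injI)
  fix m n assume eq: "(poly f ^^ m) w = (poly f ^^ n) w"
  have e1: "v ((poly f ^^ m) w) = int (degree f) ^ m * v w" using poly_dval_iter[OF assms(1-6), of m] by blast
  have e2: "v ((poly f ^^ n) w) = int (degree f) ^ n * v w" using poly_dval_iter[OF assms(1-6), of n] by blast
  have "int (degree f) ^ m * v w = int (degree f) ^ n * v w" using e1 e2 eq by metis
  then have "int (degree f) ^ m = int (degree f) ^ n" using w(2) by simp
  moreover have "int (degree f) > 1" using d by simp
  ultimately show "m = n" by (simp add: power_inject_exp)
qed

section \<open>The ring O\<close>

lemma O_subring:
  assumes vinf: "dval vinf"
  shows "subring (ring_O vinf)"
proof -
  let ?O = "ring_O vinf"
  have mem: "x \<in> ?O \<longleftrightarrow> (\<forall>v. dval v \<and> v \<noteq> vinf \<longrightarrow> x = 0 \<or> 0 \<le> v x)" for x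
    unfolding ring_O_def by simp
  have add: "x + y \<in> ?O" if "x \<in> ?O" "y \<in> ?O" for x y
    unfolding mem
  proof (intro allI impI)
    fix v assume v: "dval v \<and> v \<noteq> vinf"
    show "x + y = 0 \<or> 0 \<le> v (x + y)"
    proof (cases "x = 0 \<or> y = 0 \<or> x + y = 0")
      case True then show ?thesis using that v mem by auto
    next
      case False
      then show ?thesis using dvalD(3)[of v x y] that v mem by force
    qed
  qed
  have mul: "x * y \<in> ?O" if "x \<in> ?O" "y \<in> ?O" for x y
    unfolding mem
  proof (intro allI impI)
    fix v assume v: "dval v \<and> v \<noteq> vinf"
    show "x * y = 0 \<or> 0 \<le> v (x * y)"
    proof (cases "x = 0 \<or> y = 0")
      case True then show ?thesis by auto
    next
      case False
      then show ?thesis using dvalD(2)[of v x y] that v mem by force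
    qed
  qed
  have neg: "- x \<in> ?O" if "x \<in> ?O" for x
    using that dval_uminus unfolding mem by fastforce
  have "0 \<in> ?O" unfolding mem by simp
  moreover have "1 \<in> ?O" unfolding mem using dval_1 by fastforce
  ultimately show ?thesis unfolding subring_def using add mul neg by simp
qed

lemma O_unit_const:
  assumes K: "global_function_field TYPE('k::field)" and vinf: "dval vinf"
    and x: "x \<in> ring_O vinf" "inverse x \<in> ring_O vinf" "x \<noteq> 0"
  shows "x \<in> (constant_field :: 'k set)"
proof (rule ccontr)
  assume nc: "x \<notin> constant_field"
  have ninv: "inverse x \<notin> constant_field"
    using nc subfieldD(2)[OF C_subfield[OF K], of "inverse x"] x(3) by auto
  obtain v where v: "dval v" "v x < 0" using nc const_char[OF K, of x] x(3) by force
  obtain v' where v': "dval v'" "v' (inverse x) < 0" using ninv const_char[OF K, of "inverse x"] x(3) by force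
  have "v = vinf" using x(1) v x(3) unfolding ring_O_def by force
  moreover have "v' = vinf" using x(2) v' x(3) unfolding ring_O_def by force
  ultimately show False using v v' dval_inverse[OF vinf x(3)] by simp
qed

section \<open>Periodic points\<close>

lemma Per_closed: "x \<in> Per f \<Longrightarrow> f x \<in> Per f"
proof -
  assume "x \<in> Per f"
  then obtain n where n: "n \<ge> 1" "(f ^^ n) x = x" unfolding Per_def by blast
  have "(f ^^ n) (f x) = f ((f ^^ n) x)" by (simp add: funpow_swap1)
  then show "f x \<in> Per f" unfolding Per_def using n by auto
qed

lemma Per_iter: "x \<in> Per f \<Longrightarrow> (f ^^ k) x \<in> Per f"
  by (induction k) (auto intro: Per_closed)

lemma Per_mult: "(f ^^ n) x = x \<Longrightarrow> (f ^^ (n * m)) x = x"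
proof (induction m)
  case 0 then show ?case by simp
next
  case (Suc m)
  have "(f ^^ (n * Suc m)) x = (f ^^ n) ((f ^^ (n * m)) x)" by (simp add: funpow_add)
  then show ?case using Suc by simp
qed

lemma Per_common:
  assumes "x \<in> Per f" "y \<in> Per f"
  obtains P where "P \<ge> 1" "(f ^^ P) x = x" "(f ^^ P) y = y"
proof -
  obtain n where n: "n \<ge> 1" "(f ^^ n) x = x" using assms(1) unfolding Per_def by blast
  obtain m where m: "m \<ge> 1" "(f ^^ m) y = y" using assms(2) unfolding Per_def by blast
  have "(f ^^ (n * m)) x = x" using Per_mult[OF n(2)] .
  moreover have "(f ^^ (n * m)) y = y" using Per_mult[OF m(2), of n] by (simp add: mult.commute)
  moreover have "n * m \<ge> 1" using n m by simp
  ultimately show ?thesis using that[of "n * m"] by blast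
qed

locale dynsetup =
  fixes \<phi> :: "'k::field poly" and vinf :: "'k \<Rightarrow> int"
  assumes K: "global_function_field TYPE('k)"
    and vinf: "dval vinf"
    and coeffs: "\<forall>i. coeff \<phi> i \<in> ring_O vinf"
    and deg2: "degree \<phi> \<ge> 2"
    and lc: "lead_coeff \<phi> \<in> ring_O vinf" "inverse (lead_coeff \<phi>) \<in> ring_O vinf"
begin

abbreviation "f \<equiv> poly \<phi>"
abbreviation "RO \<equiv> ring_O vinf"
abbreviation "CC \<equiv> (constant_field :: 'k set)"

lemma OR: "subring RO" using O_subring[OF vinf] .
lemma CF: "subfield CC" using C_subfield[OF K] .
lemma CR: "subring CC" using subfieldD(1)[OF CF] .

lemma lc0: "lead_coeff \<phi> \<noteq> 0" using deg2 by auto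

lemma Per_in_O: "x \<in> Per f \<Longrightarrow> x \<in> RO"
proof (rule ccontr)
  assume xP: "x \<in> Per f" and xO: "x \<notin> RO"
  then obtain v where v: "dval v" "v \<noteq> vinf" "x \<noteq> 0" "v x < 0" unfolding ring_O_def by force
  have cf: "coeff \<phi> i = 0 \<or> v (coeff \<phi> i) \<ge> 0" for i using coeffs v(1,2) unfolding ring_O_def by blast
  have l1: "v (lead_coeff \<phi>) \<ge> 0" using lc(1) v(1,2) lc0 unfolding ring_O_def by blast
  have l2: "v (inverse (lead_coeff \<phi>)) \<ge> 0" using lc(2) v(1,2) lc0 unfolding ring_O_def by force
  have lv: "v (lead_coeff \<phi>) = 0" using l1 l2 dval_inverse[OF v(1) lc0] by simp
  obtain n where n: "n \<ge> 1" "(f ^^ n) x = x" using xP unfolding Per_def by blast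
  have inj: "inj (\<lambda>n. (f ^^ n) x)" by (rule poly_dval_iter_inj[OF v(1) cf lc0 lv v(3,4) deg2])
  have "(f ^^ n) x = (f ^^ 0) x" using n by simp
  then show False using inj n(1) unfolding inj_def by fastforce
qed

lemma O_unit: "x \<in> RO \<Longrightarrow> inverse x \<in> RO \<Longrightarrow> x \<noteq> 0 \<Longrightarrow> x \<in> CC"
  using O_unit_const[OF K vinf] by blast

lemma f_diff:
  assumes "a \<in> RO" "b \<in> RO"
  shows "\<exists>H\<in>RO. f a - f b = (a - b) * H"
proof -
  define H where "H = (\<Sum>i\<le>degree \<phi>. coeff \<phi> i * (\<Sum>j<i. b ^ (i - Suc j) * a ^ j))"
  have "f a - f b = (\<Sum>i\<le>degree \<phi>. coeff \<phi> i * (a ^ i - b ^ i))"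
    by (simp add: poly_altdef sum_subtractf algebra_simps)
  also have "\<dots> = (a - b) * H" unfolding H_def
    by (simp add: power_diff_sumr2 sum_distrib_left algebra_simps)
  finally have "f a - f b = (a - b) * H" .
  moreover have "H \<in> RO" unfolding H_def using coeffs assms
    by (intro subring_sum[OF OR] subringD(4)[OF OR] subring_power[OF OR]) auto
  ultimately show ?thesis by blast
qed

lemma lemmaD:
  assumes x: "x \<in> Per f" and y: "y \<in> Per f" and xy: "x \<noteq> y"
  shows "\<exists>\<epsilon>. \<epsilon> \<in> CC \<and> \<epsilon> \<noteq> 0 \<and> (f ^^ k) x - (f ^^ k) y = \<epsilon> * (x - y)"
proof -
  obtain P where P: "P \<ge> 1" "(f ^^ P) x = x" "(f ^^ P) y = y" using Per_common[OF x y] by blast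
  define D where "D i = (f ^^ i) x - (f ^^ i) y" for i
  have D0: "D i \<noteq> 0" for i
  proof
    assume "D i = 0"
    then have eq: "(f ^^ i) x = (f ^^ i) y" unfolding D_def by simp
    have "i \<le> P * i" using P(1) by simp
    then have Pi: "P * i = (P * i - i) + i" by simp
    have "(f ^^ (P * i - i + i)) x = (f ^^ (P * i - i)) ((f ^^ i) x)" "(f ^^ (P * i - i + i)) y = (f ^^ (P * i - i)) ((f ^^ i) y)"
      by (simp_all only: funpow_add comp_apply)
    then have "(f ^^ (P * i)) x = (f ^^ (P * i - i)) ((f ^^ i) x)" "(f ^^ (P * i)) y = (f ^^ (P * i - i)) ((f ^^ i) y)"
      unfolding Pi[symmetric] .
    then have "(f ^^ (P * i)) x = (f ^^ (P * i)) y" using eq by simp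
    then show False using Per_mult[OF P(2), of i] Per_mult[OF P(3), of i] xy by simp
  qed
  have step: "D (Suc i) / D i \<in> RO" for i
  proof -
    have xi: "(f ^^ i) x \<in> RO" by (rule Per_in_O[OF Per_iter[OF x]])
    have yi: "(f ^^ i) y \<in> RO" by (rule Per_in_O[OF Per_iter[OF y]])
    obtain H where H: "H \<in> RO" "f ((f ^^ i) x) - f ((f ^^ i) y) = ((f ^^ i) x - (f ^^ i) y) * H"
      using f_diff[OF xi yi] by blast
    have "D (Suc i) = D i * H" unfolding D_def using H(2) by simp
    then have "D (Suc i) / D i = H" using D0[of i] by simp
    then show ?thesis using H(1) by simp
  qed
  have chain: "D (i + j) / D i \<in> RO" for i j
  proof (induction j)
    case 0 then show ?case using D0[of i] subringD(2)[OF OR] by simp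
  next
    case (Suc j)
    have n1: "D (i + j) \<noteq> 0" by (rule D0)
    have e: "D (i + Suc j) / D i = (D (i + j) / D i) * (D (Suc (i + j)) / D (i + j))"
      using n1 by simp
    have "(D (i + j) / D i) * (D (Suc (i + j)) / D (i + j)) \<in> RO" by (rule subringD(4)[OF OR Suc step])
    then show ?case unfolding e .
  qed
  have "D k / D 0 \<in> RO" using chain[of 0 k] by simp
  moreover have "D 0 / D k \<in> RO"
  proof -
    have "D (k + (P * k - k)) = D 0"
    proof -
      have "k + (P * k - k) = P * k" using P(1) by simp
      then show ?thesis unfolding D_def using Per_mult[OF P(2), of k] Per_mult[OF P(3), of k]
        by (simp add: mult.commute)
    qed
    then show ?thesis using chain[of k "P * k - k"] by simp
  qed
  moreover have "D k / D 0 \<noteq> 0" using D0 by simp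
  ultimately have eps: "D k / D 0 \<in> CC" using O_unit[of "D k / D 0"] by simp
  have xy0: "x - y \<noteq> 0" using xy by simp
  show ?thesis
  proof (intro exI conjI)
    show "D k / D 0 \<in> CC" by (rule eps)
    show "D k / D 0 \<noteq> 0" using D0[of k] D0[of 0] by simp
    have "D 0 = x - y" unfolding D_def by simp
    then show "(f ^^ k) x - (f ^^ k) y = D k / D 0 * (x - y)" using xy0 by (simp add: D_def)
  qed
qed

end


definition per :: "('a \<Rightarrow> 'a) \<Rightarrow> 'a \<Rightarrow> nat" where
  "per g x = (LEAST n. n \<ge> 1 \<and> (g ^^ n) x = x)"

lemma per_exact:
  assumes "x \<in> Per g" shows "exact_period g (per g x) x"
proof -
  have ex: "\<exists>n. n \<ge> 1 \<and> (g ^^ n) x = x" using assms unfolding Per_def by blast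
  have a: "per g x \<ge> 1 \<and> (g ^^ per g x) x = x" unfolding per_def by (rule LeastI_ex[OF ex])
  have b: "(g ^^ m) x \<noteq> x" if "1 \<le> m" "m < per g x" for m
  proof
    assume "(g ^^ m) x = x"
    then have "per g x \<le> m" unfolding per_def using that(1) by (intro Least_le) simp
    then show False using that(2) by simp
  qed
  show ?thesis unfolding exact_period_def using a b by blast
qed

lemma exact_unique: "exact_period g n x \<Longrightarrow> exact_period g m x \<Longrightarrow> n = m"
  unfolding exact_period_def by (metis linorder_neqE_nat)

lemma exact_per: "x \<in> Per g \<Longrightarrow> exact_period g n x \<longleftrightarrow> n = per g x"
  using per_exact exact_unique by metis

lemma exact_inj:
  assumes e: "exact_period g n x"
  shows "inj_on (\<lambda>i. (g ^^ i) x) {..<n}"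
proof (rule inj_onI)
  have gen: False if ij: "i < j" "j < n" "(g ^^ i) x = (g ^^ j) x" for i j
  proof -
    have "(g ^^ (n - j + i)) x = (g ^^ (n - j)) ((g ^^ i) x)" by (simp add: funpow_add)
    also have "\<dots> = (g ^^ (n - j)) ((g ^^ j) x)" using ij(3) by simp
    also have "\<dots> = (g ^^ (n - j + j)) x" by (simp add: funpow_add)
    also have "n - j + j = n" using ij by simp
    also have "(g ^^ n) x = x" using e unfolding exact_period_def by blast
    finally have "(g ^^ (n - j + i)) x = x" .
    moreover have "1 \<le> n - j + i" "n - j + i < n" using ij by auto
    ultimately show False using e unfolding exact_period_def by blast
  qed
  fix i j assume "i \<in> {..<n}" "j \<in> {..<n}" "(g ^^ i) x = (g ^^ j) x"
  then show "i = j" using gen[of i j] gen[of j i] by (metis lessThan_iff linorder_neqE_nat)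
qed

lemma Fix_sub_Per: "Fix g \<subseteq> Per g"
  unfolding Fix_def Per_def by (auto intro: exI[of _ 1])

lemma interp:
  assumes C: "subfield C" and Z: "finite Z" "Z \<subseteq> C" and g: "\<And>z. z \<in> Z \<Longrightarrow> g z \<in> C"
  shows "\<exists>h. poly_over C h \<and> degree h \<le> card Z \<and> (h = 0 \<or> degree h < card Z) \<and> (\<forall>z\<in>Z. poly h z = g z)"
  using Z g
proof (induction Z rule: finite_induct)
  case empty
  then show ?case using poly_over_0[OF subfieldD(1)[OF C]] by (intro exI[of _ 0]) simp
next
  case (insert z0 Z)
  have CR: "subring C" using subfieldD(1)[OF C] .
  obtain h0 where h0: "poly_over C h0" "degree h0 \<le> card Z" "\<forall>z\<in>Z. poly h0 z = g z"
    using insert by auto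
  define P where "P = (\<Prod>z\<in>Z. [:- z, 1:])"
  have PC: "poly_over C P" unfolding P_def using insert(4)
    by (intro poly_over_prod[OF CR] poly_over_pCons[OF CR] subringD(5)[OF CR] poly_over_const[OF CR] subringD(2)[OF CR]) auto
  have Pz: "poly P z = 0" if "z \<in> Z" for z unfolding P_def using insert(1) that by (simp add: poly_prod)
  have Pz0: "poly P z0 \<noteq> 0" unfolding P_def using insert(1,2) by (simp add: poly_prod)
  have dP: "degree P \<le> card Z"
  proof -
    have "degree P \<le> sum (degree \<circ> (\<lambda>z. [:- z, 1:])) Z" unfolding P_def using insert(1) by (rule degree_prod_sum_le)
    also have "\<dots> = card Z" by simp
    finally show ?thesis .
  qed
  define c where "c = (g z0 - poly h0 z0) / poly P z0"
  have cC: "c \<in> C" unfolding c_def using insert(4,5) h0(1) PC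
    by (intro subfieldD(3)[OF C] subringD(6)[OF CR] subring_poly[OF CR]) auto
  define h where "h = h0 + smult c P"
  have hC: "poly_over C h" unfolding h_def by (intro poly_over_add[OF CR] h0(1) poly_over_smult[OF CR cC PC])
  have dh: "degree h \<le> card Z"
    unfolding h_def using degree_add_le[of h0 "card Z" "smult c P"] h0(2) dP degree_smult_le[of c P] by linarith
  have card: "card (insert z0 Z) = Suc (card Z)" using insert(1,2) by simp
  have vals: "\<forall>z\<in>insert z0 Z. poly h z = g z"
    unfolding h_def using h0(3) Pz Pz0 by (auto simp: c_def)
  show ?case using hC dh card vals by (intro exI[of _ h]) simp
qed

context dynsetup
begin

lemma lemmaA:
  assumes a: "a \<in> Per f" "f a \<noteq> a"
  shows "\<exists>\<gamma>. \<gamma> \<in> CC \<and> (f ^^ k) a = a + \<gamma> * (f a - a)"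
proof (induction k)
  case 0 then show ?case using subringD(1)[OF CR] by (intro exI[of _ 0]) simp
next
  case (Suc k)
  then obtain \<gamma> where g: "\<gamma> \<in> CC" "(f ^^ k) a = a + \<gamma> * (f a - a)" by blast
  obtain \<epsilon> where e: "\<epsilon> \<in> CC" "(f ^^ k) (f a) - (f ^^ k) a = \<epsilon> * (f a - a)"
    using lemmaD[OF Per_closed[OF a(1)] a(1) a(2)] by blast
  have "(f ^^ Suc k) a = (f ^^ k) (f a)" by (simp add: funpow_swap1)
  also have "\<dots> = (f ^^ k) a + \<epsilon> * (f a - a)" using e(2) by (simp add: algebra_simps)
  also have "\<dots> = a + \<gamma> * (f a - a) + \<epsilon> * (f a - a)" unfolding g(2) ..
  finally have "(f ^^ Suc k) a = a + (\<gamma> + \<epsilon>) * (f a - a)" by (simp add: algebra_simps)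
  moreover have "\<gamma> + \<epsilon> \<in> CC" using subringD(3)[OF CR g(1) e(1)] .
  ultimately show ?case by blast
qed

lemma lemmaB:
  assumes a: "a \<in> Per f" "f a \<noteq> a" and y: "y \<in> Per f" "(f ^^ k) y = y" and ak: "(f ^^ k) a \<noteq> a"
  shows "\<exists>\<beta>. \<beta> \<in> CC \<and> y = a + \<beta> * (f a - a)"
proof -
  have ya: "y \<noteq> a" using y(2) ak by auto
  obtain \<epsilon> where e: "\<epsilon> \<in> CC" "(f ^^ k) y - (f ^^ k) a = \<epsilon> * (y - a)"
    using lemmaD[OF y(1) a(1) ya] by blast
  obtain \<gamma> where g: "\<gamma> \<in> CC" "(f ^^ k) a = a + \<gamma> * (f a - a)" using lemmaA[OF a] by blast
  have u0: "f a - a \<noteq> 0" using a(2) by simp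
  have eq: "(1 - \<epsilon>) * (y - a) = \<gamma> * (f a - a)" using e(2) g(2) y(2) by (simp add: algebra_simps)
  have e1: "1 - \<epsilon> \<noteq> 0"
  proof
    assume "1 - \<epsilon> = 0"
    then have "\<gamma> * (f a - a) = 0" using eq by simp
    then have "\<gamma> = 0" using u0 by simp
    then show False using g(2) ak by simp
  qed
  have "y = a + (\<gamma> / (1 - \<epsilon>)) * (f a - a)"
  proof -
    have "y - a = (\<gamma> / (1 - \<epsilon>)) * (f a - a)" using eq e1 by (simp add: field_simps)
    then show ?thesis by (simp add: algebra_simps)
  qed
  moreover have "\<gamma> / (1 - \<epsilon>) \<in> CC"
    using subfieldD(3)[OF CF g(1) subringD(6)[OF CR subringD(2)[OF CR] e(1)]] .
  ultimately show ?thesis by blast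
qed

lemma lemmaE:
  assumes u: "u \<noteq> 0" and pp: "p \<noteq> p'"
    and C: "\<gamma> \<in> CC" "\<delta> \<in> CC" "\<alpha> \<in> CC" "\<beta> \<in> CC"
    and e: "p = a + \<gamma> * u" "p' = a + \<delta> * u" "p = b + \<alpha> * w" "p' = b + \<beta> * w"
  shows "\<exists>\<beta>'. \<beta>' \<in> CC \<and> b = a + \<beta>' * u"
proof -
  have ab: "\<beta> - \<alpha> \<noteq> 0" using pp e by auto
  have "(b + \<beta> * w) - (b + \<alpha> * w) = (a + \<delta> * u) - (a + \<gamma> * u)" using e by simp
  then have "(\<beta> - \<alpha>) * w = (\<delta> - \<gamma>) * u" by (simp add: algebra_simps)
  then have w: "w = ((\<delta> - \<gamma>) / (\<beta> - \<alpha>)) * u" using ab by (simp add: field_simps)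
  have "b = a + (\<gamma> - \<alpha> * ((\<delta> - \<gamma>) / (\<beta> - \<alpha>))) * u"
  proof -
    have "b = p - \<alpha> * w" using e(3) by simp
    also have "\<dots> = a + \<gamma> * u - \<alpha> * (((\<delta> - \<gamma>) / (\<beta> - \<alpha>)) * u)" using e(1) w by simp
    finally show ?thesis by (simp add: algebra_simps)
  qed
  moreover have "\<gamma> - \<alpha> * ((\<delta> - \<gamma>) / (\<beta> - \<alpha>)) \<in> CC"
    using C by (intro subringD(6)[OF CR] subringD(4)[OF CR] subfieldD(3)[OF CF]) auto
  ultimately show ?thesis by blast
qed

lemma CC_fin: "finite CC" using C_finite[OF K] .

lemma line_card: "card ((\<lambda>c. a + c * u) ` CC) \<le> card CC"
  by (rule card_image_le[OF CC_fin])

lemma per_le_q: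
  assumes a: "a \<in> Per f" "f a \<noteq> a"
  shows "per f a \<le> card CC"
proof -
  let ?n = "per f a"
  have e: "exact_period f ?n a" using per_exact[OF a(1)] .
  have "(\<lambda>i. (f ^^ i) a) ` {..<?n} \<subseteq> (\<lambda>c. a + c * (f a - a)) ` CC"
    using lemmaA[OF a] by blast
  then have "card ((\<lambda>i. (f ^^ i) a) ` {..<?n}) \<le> card ((\<lambda>c. a + c * (f a - a)) ` CC)"
    using CC_fin by (intro card_mono) auto
  moreover have "card ((\<lambda>i. (f ^^ i) a) ` {..<?n}) = ?n"
    using card_image[OF exact_inj[OF e]] by simp
  ultimately show ?thesis using line_card[of a "f a - a"] by simp
qed

end


context dynsetup
begin

lemma main_in_line:
  assumes nb: "Per f \<noteq> Fix f" and nc2: "\<not> two_cycles_condition f"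
  shows "\<exists>a. a \<in> Per f \<and> f a \<noteq> a \<and> Per f \<subseteq> (\<lambda>c. a + c * (f a - a)) ` CC"
proof -
  obtain a0 where a0: "a0 \<in> Per f" "f a0 \<noteq> a0" using nb Fix_sub_Per[of f] unfolding Fix_def by blast
  define S where "S = {per f x | x. x \<in> Per f \<and> f x \<noteq> x}"
  have Sb: "S \<subseteq> {..card CC}" unfolding S_def using per_le_q by auto
  then have Sf: "finite S" using finite_subset by blast
  have Sne: "per f a0 \<in> S" unfolding S_def using a0 by blast
  define n where "n = Max S"
  have "n \<in> S" unfolding n_def using Sf Sne by (intro Max_in) auto
  then obtain a where a: "a \<in> Per f" "f a \<noteq> a" "per f a = n" unfolding S_def by blast
  have nmax: "per f x \<le> n" if "x \<in> Per f" "f x \<noteq> x" for x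
    unfolding n_def using Sf that unfolding S_def by (intro Max_ge) auto
  have ea: "exact_period f n a" using per_exact[OF a(1)] a(3) by simp
  have n2: "n \<ge> 2"
  proof -
    have "n \<ge> 1" using ea unfolding exact_period_def by blast
    moreover have "n \<noteq> 1" using ea a(2) unfolding exact_period_def by auto
    ultimately show ?thesis by simp
  qed
  have fixper: "per f x = 1" if "x \<in> Per f" "f x = x" for x
  proof -
    have "exact_period f 1 x" unfolding exact_period_def using that by simp
    then show ?thesis using exact_per[OF that(1)] by simp
  qed
  have per_le: "per f x \<le> n" if "x \<in> Per f" for x
    using nmax[OF that] fixper[OF that] n2 by (cases "f x = x") auto
  have per_ge: "per f x \<ge> 1" if "x \<in> Per f" for x using per_exact[OF that] unfolding exact_period_def by blast
  let ?L = "\<lambda>b. (\<lambda>c. b + c * (f b - b)) ` CC"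
  have B: "y \<in> ?L b" if hb: "b \<in> Per f" "f b \<noteq> b" "y \<in> Per f" "(f ^^ k) y = y" "(f ^^ k) b \<noteq> b" for b y k
  proof -
    obtain \<beta> where "\<beta> \<in> CC" "y = b + \<beta> * (f b - b)" using lemmaB[OF hb] by blast
    then show ?thesis by blast
  qed
  have sub: "y \<in> ?L a" if y: "y \<in> Per f" for y
  proof -
    define m where "m = per f y"
    have ey: "exact_period f m y" unfolding m_def using per_exact[OF y] .
    have m1: "m \<ge> 1" "m \<le> n" unfolding m_def using per_ge[OF y] per_le[OF y] by auto
    have ym: "(f ^^ m) y = y" using ey unfolding exact_period_def by blast
    show ?thesis
    proof (cases "m = n")
      case False
      then have "m < n" using m1 by simp
      then have "(f ^^ m) a \<noteq> a" using ea m1 unfolding exact_period_def by blast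
      then show ?thesis using B[OF a(1,2) y ym] by blast
    next
      case True
      show ?thesis
      proof (cases "\<exists>k. y = (f ^^ k) a")
        case True
        then obtain k where "y = (f ^^ k) a" by blast
        then show ?thesis using lemmaA[OF a(1,2), of k] by blast
      next
        case nin: False
        show ?thesis
        proof (rule ccontr)
          assume yL: "y \<notin> ?L a"
          have eyn: "exact_period f n y" using ey True by simp
          have "(f ^^ 1) y \<noteq> y" using eyn n2 unfolding exact_period_def by auto
          then have fy: "f y \<noteq> y" by simp
          have third: "\<exists>x y. exact_period f n x \<and> exact_period f n y \<and> y \<notin> {(f ^^ m) x | m. True}"
            using ea eyn nin by blast
          have n1: "n > 1" using n2 by simp
          have "\<not> ((\<forall>x\<in>Per f. x \<in> Fix f \<or> exact_period f n x) \<and> (\<forall>x\<in>Fix f. \<forall>y\<in>Fix f. x = y) \<and>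
              (\<exists>x y. exact_period f n x \<and> exact_period f n y \<and> y \<notin> {(f ^^ m) x | m. True}))"
            using nc2 n1 unfolding two_cycles_condition_def by blast
          then have "\<not> ((\<forall>x\<in>Per f. x \<in> Fix f \<or> exact_period f n x) \<and> (\<forall>x\<in>Fix f. \<forall>y\<in>Fix f. x = y))"
            using third by blast
          then consider (z) z where "z \<in> Per f" "z \<notin> Fix f" "\<not> exact_period f n z"
            | (fix2) f1 f2 where "f1 \<in> Fix f" "f2 \<in> Fix f" "f1 \<noteq> f2" by blast
          then show False
          proof cases
            case z
            define m' where "m' = per f z"
            have fz: "f z \<noteq> z" using z(2) unfolding Fix_def by simp
            have m'n: "m' \<noteq> n" using z(1,3) exact_per unfolding m'_def by metis
            have m'1: "1 \<le> m'" "m' < n" using per_ge[OF z(1)] per_le[OF z(1)] m'n unfolding m'_def by auto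
            have zm: "(f ^^ m') z = z" using per_exact[OF z(1)] unfolding m'_def exact_period_def by blast
            have fzm: "(f ^^ m') (f z) = f z" using zm by (metis funpow_swap1)
            have fzP: "f z \<in> Per f" using Per_closed[OF z(1)] .
            have am: "(f ^^ m') a \<noteq> a" using ea m'1 unfolding exact_period_def by blast
            have ym': "(f ^^ m') y \<noteq> y" using eyn m'1 unfolding exact_period_def by blast
            obtain \<gamma> where g: "\<gamma> \<in> CC" "z = a + \<gamma> * (f a - a)" using lemmaB[OF a(1,2) z(1) zm am] by blast
            obtain \<delta> where d: "\<delta> \<in> CC" "f z = a + \<delta> * (f a - a)" using lemmaB[OF a(1,2) fzP fzm am] by blast
            obtain \<alpha> where al: "\<alpha> \<in> CC" "z = y + \<alpha> * (f y - y)" using lemmaB[OF y fy z(1) zm ym'] by blast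
            obtain \<beta> where be: "\<beta> \<in> CC" "f z = y + \<beta> * (f y - y)" using lemmaB[OF y fy fzP fzm ym'] by blast
            have "f a - a \<noteq> 0" using a(2) by simp
            from lemmaE[OF this _ g(1) d(1) al(1) be(1) g(2) d(2) al(2) be(2)] fz
            obtain \<beta>' where "\<beta>' \<in> CC" "y = a + \<beta>' * (f a - a)" by auto
            then show False using yL by blast
          next
            case fix2
            have P1: "f1 \<in> Per f" "f2 \<in> Per f" using fix2(1,2) Fix_sub_Per[of f] by blast+
            have fx: "(f ^^ 1) f1 = f1" "(f ^^ 1) f2 = f2" using fix2 unfolding Fix_def by simp_all
            have a1: "(f ^^ 1) a \<noteq> a" using a(2) by simp
            have y1: "(f ^^ 1) y \<noteq> y" using fy by simp
            obtain \<gamma> where g: "\<gamma> \<in> CC" "f1 = a + \<gamma> * (f a - a)" using lemmaB[OF a(1,2) P1(1) fx(1) a1] by blast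
            obtain \<delta> where d: "\<delta> \<in> CC" "f2 = a + \<delta> * (f a - a)" using lemmaB[OF a(1,2) P1(2) fx(2) a1] by blast
            obtain \<alpha> where al: "\<alpha> \<in> CC" "f1 = y + \<alpha> * (f y - y)" using lemmaB[OF y fy P1(1) fx(1) y1] by blast
            obtain \<beta> where be: "\<beta> \<in> CC" "f2 = y + \<beta> * (f y - y)" using lemmaB[OF y fy P1(2) fx(2) y1] by blast
            have "f a - a \<noteq> 0" using a(2) by simp
            from lemmaE[OF this fix2(3) g(1) d(1) al(1) be(1) g(2) d(2) al(2) be(2)]
            obtain \<beta>' where "\<beta>' \<in> CC" "y = a + \<beta>' * (f a - a)" by auto
            then show False using yL by blast
          qed
        qed
      qed
    qed
  qed
  show ?thesis using a(1,2) sub by blast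
qed

lemma main_bound:
  assumes nc: "\<not> conj_to_poly_over CC \<phi>" and nb: "Per f \<noteq> Fix f" and nc2: "\<not> two_cycles_condition f"
  shows "finite (Per f) \<and> card (Per f) \<le> min (degree \<phi>) (card CC)"
proof -
  obtain a where a: "a \<in> Per f" "f a \<noteq> a" and sub: "Per f \<subseteq> (\<lambda>c. a + c * (f a - a)) ` CC"
    using main_in_line[OF nb nc2] by blast
  define u where "u = f a - a"
  have u0: "u \<noteq> 0" unfolding u_def using a(2) by simp
  have fin: "finite (Per f)" using sub CC_fin finite_subset by blast
  have cq: "card (Per f) \<le> card CC"
    using card_mono[OF finite_imageI[OF CC_fin] sub] line_card[of a u] unfolding u_def by simp
  have cd: "card (Per f) \<le> degree \<phi>"
  proof (rule ccontr)
    assume "\<not> card (Per f) \<le> degree \<phi>"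
    then have "Suc (degree \<phi>) \<le> card (Per f)" by simp
    then obtain S' where S': "S' \<subseteq> Per f" "card S' = Suc (degree \<phi>)" "finite S'"
      by (rule obtain_subset_with_card_n)
    define Z where "Z = {c \<in> CC. a + c * u \<in> S'}"
    have injl: "inj_on (\<lambda>c. a + c * u) Z" using u0 by (intro inj_onI) simp
    have SZ: "S' = (\<lambda>c. a + c * u) ` Z"
    proof
      show "S' \<subseteq> (\<lambda>c. a + c * u) ` Z"
      proof
        fix s assume s: "s \<in> S'"
        then obtain c where "c \<in> CC" "s = a + c * u" using S'(1) sub unfolding u_def by blast
        then show "s \<in> (\<lambda>c. a + c * u) ` Z" unfolding Z_def using s by blast
      qed
      show "(\<lambda>c. a + c * u) ` Z \<subseteq> S'" unfolding Z_def by blast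
    qed
    have cZ: "card Z = Suc (degree \<phi>)" using S'(2) card_image[OF injl] SZ by simp
    have Zf: "finite Z" using CC_fin unfolding Z_def by simp
    have ZC: "Z \<subseteq> CC" unfolding Z_def by blast
    define g where "g c = (f (a + c * u) - a) / u" for c
    have gC: "g c \<in> CC" if "c \<in> Z" for c
    proof -
      have "a + c * u \<in> Per f" using that S'(1) unfolding Z_def by blast
      then have "f (a + c * u) \<in> Per f" by (rule Per_closed)
      then obtain c' where c': "c' \<in> CC" "f (a + c * u) = a + c' * u" using sub unfolding u_def by blast
      then have "g c = c'" unfolding g_def using u0 by simp
      then show ?thesis using c'(1) by simp
    qed
    obtain h where h: "poly_over CC h" "h = 0 \<or> degree h < card Z" "\<forall>z\<in>Z. poly h z = g z"
      using interp[of CC Z g, OF CF Zf ZC gC] by blast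
    define R where "R = smult (inverse u) (pcompose \<phi> [:a, u:]) - [:a / u:]"
    have polyR: "poly R c = g c" for c
      unfolding R_def g_def using u0 by (simp add: poly_pcompose field_simps)
    have dR: "degree R \<le> degree \<phi>"
    proof -
      have "degree (pcompose \<phi> [:a, u:]) = degree \<phi>" using u0 by (simp add: degree_pcompose)
      then have "degree (smult (inverse u) (pcompose \<phi> [:a, u:])) \<le> degree \<phi>"
        using degree_smult_le by (metis)
      then show ?thesis unfolding R_def using degree_diff_le[of _ "degree \<phi>" "[:a / u:]"] by simp
    qed
    have "h = R"
    proof (rule poly_eqI_degree)
      show "\<And>x. x \<in> Z \<Longrightarrow> poly h x = poly R x" using h(3) polyR by simp
      show "degree h < card Z" using h(2) cZ by auto
      show "degree R < card Z" using dR cZ by simp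
    qed
    have arg: "(x - (- (a / u))) / inverse u = a + x * u" for x using u0 by (simp add: field_simps)
    have "\<forall>x. poly h x = inverse u * poly \<phi> ((x - (- (a / u))) / inverse u) + (- (a / u))"
    proof
      fix x
      show "poly h x = inverse u * poly \<phi> ((x - (- (a / u))) / inverse u) + (- (a / u))"
        unfolding arg \<open>h = R\<close> polyR g_def using u0 by (simp add: field_simps)
    qed
    then have "conj_to_poly_over CC \<phi>" unfolding conj_to_poly_over_def using h(1) u0
      by (intro exI[of _ "inverse u"] exI[of _ "- (a / u)"] exI[of _ h]) simp
    then show False using nc by simp
  qed
  show ?thesis using fin cq cd by simp
qed

end


lemma K_infinite:
  assumes K: "global_function_field TYPE('k::field)"
  shows "infinite (UNIV :: 'k set)"
proof
  assume fin: "finite (UNIV :: 'k set)"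
  obtain p t where t: "\<not> algebraic_over (prime_subfield::'k set) t" using gff_data[OF K] by metis
  have "inj (\<lambda>n::nat. t ^ n)"
  proof (rule injI)
    fix i j :: nat assume eq: "t ^ i = t ^ j"
    show "i = j"
    proof (rule ccontr)
      assume ij: "i \<noteq> j"
      define h :: "'k poly" where "h = monom 1 i - monom 1 j"
      have "coeff h i = 1" unfolding h_def using ij by (simp add: coeff_monom)
      then have "h \<noteq> 0" by auto
      moreover have "poly_over prime_subfield h" unfolding h_def
        by (intro poly_over_diff[OF Fp_subring] poly_over_monom[OF Fp_subring] subringD(2)[OF Fp_subring])
      moreover have "poly h t = 0" unfolding h_def using eq by (simp add: poly_monom)
      ultimately show False using t unfolding algebraic_over_def by blast
    qed
  qed
  note injt = this
  have "finite (range (\<lambda>n::nat. t ^ n))" using fin by (rule finite_subset[OF subset_UNIV])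
  then have "finite (UNIV :: nat set)" by (rule finite_imageD[OF _ injt])
  then show False by simp
qed

lemma poly_eq_from_fun:
  assumes "infinite (UNIV :: 'k::field set)" "\<And>x. poly p x = poly (q :: 'k poly) x"
  shows "p = q"
proof (rule ccontr)
  assume "p \<noteq> q"
  then have "p - q \<noteq> 0" by simp
  then have "finite {x. poly (p - q) x = 0}" by (rule poly_roots_finite)
  moreover have "{x. poly (p - q) x = 0} = UNIV" using assms(2) by simp
  ultimately show False using assms(1) by simp
qed

context dynsetup
begin

lemma part_b:
  assumes "Per f = Fix f"
  shows "finite (Per f) \<and> card (Per f) \<le> degree \<phi>"
proof -
  define Q where "Q = \<phi> - [:0, 1:]"
  have dX: "degree [:0, 1::'k:] < degree \<phi>" using deg2 by simp
  have dQ: "degree Q = degree \<phi>" unfolding Q_def using dX by (metis degree_add_eq_left degree_minus diff_conv_add_uminus)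
  have Q0: "Q \<noteq> 0" using dQ deg2 by auto
  have FQ: "Fix f = {x. poly Q x = 0}" unfolding Fix_def Q_def by auto
  show ?thesis using assms FQ poly_roots_finite[OF Q0] card_poly_roots_bound[OF Q0] dQ by simp
qed

lemma part_a:
  assumes "conj_to_poly_over CC \<phi>"
  shows "finite (PrePer f) \<and> card (PrePer f) = card CC"
proof -
  obtain \<alpha> \<beta> \<psi> where ab: "\<alpha> \<noteq> 0" "poly_over CC \<psi>" "\<forall>x. poly \<psi> x = \<alpha> * f ((x - \<beta>) / \<alpha>) + \<beta>"
    using assms unfolding conj_to_poly_over_def by blast
  define \<eta> where "\<eta> y = \<alpha> * y + \<beta>" for y
  have key: "poly \<psi> (\<eta> y) = \<eta> (f y)" for y unfolding \<eta>_def using ab by simp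
  have iter: "(poly \<psi> ^^ n) (\<eta> y) = \<eta> ((f ^^ n) y)" for n y
    by (induction n) (simp_all add: key)
  have inf: "infinite (UNIV :: 'k set)" using K_infinite[OF K] .
  define \<Psi> where "\<Psi> = smult \<alpha> (pcompose \<phi> [:- \<beta> / \<alpha>, inverse \<alpha>:]) + [:\<beta>:]"
  have "poly \<psi> x = poly \<Psi> x" for x unfolding \<Psi>_def using ab by (simp add: poly_pcompose field_simps)
  then have psi: "\<psi> = \<Psi>" using poly_eq_from_fun[OF inf] by blast
  have dpc: "degree (pcompose \<phi> [:- \<beta> / \<alpha>, inverse \<alpha>:]) = degree \<phi>" using ab(1) by (simp add: degree_pcompose)
  have dpsi: "degree \<psi> = degree \<phi>"
  proof -
    have "degree (smult \<alpha> (pcompose \<phi> [:- \<beta> / \<alpha>, inverse \<alpha>:])) = degree \<phi>" using dpc ab(1) by simp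
    moreover have "degree [:\<beta>:] < degree \<phi>" using deg2 by simp
    ultimately show ?thesis unfolding psi \<Psi>_def by (simp add: degree_add_eq_left)
  qed
  have "\<psi> \<noteq> 0" using dpsi deg2 by auto
  then have lc0': "lead_coeff \<psi> \<noteq> 0" by simp
  have lcC: "lead_coeff \<psi> \<in> CC" using ab(2) unfolding poly_over_def by blast
  have Ffin: "finite (prime_subfield :: 'k set)" using Fp_finite_gff[OF K] .
  have PP: "PrePer (poly \<psi>) = CC"
  proof
    show "PrePer (poly \<psi>) \<subseteq> CC"
    proof
      fix z assume z: "z \<in> PrePer (poly \<psi>)"
      show "z \<in> CC"
      proof (rule ccontr)
        assume nz: "z \<notin> CC"
        then have z0: "z \<noteq> 0" using zero_const by blast
        obtain v where v: "dval v" "v z < 0" using nz const_char[OF K, of z] z0 by force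
        have cf: "coeff \<psi> i = 0 \<or> v (coeff \<psi> i) \<ge> 0" for i
          using ab(2) const_char[OF K] v(1) unfolding poly_over_def by blast
        have lv: "v (lead_coeff \<psi>) = 0" using dval_const0[OF Ffin v(1) lcC lc0'] .
        have "inj (\<lambda>n. (poly \<psi> ^^ n) z)"
          by (rule poly_dval_iter_inj[OF v(1) cf lc0' lv z0 v(2)]) (use dpsi deg2 in simp)
        note injz = this
        have "{(poly \<psi> ^^ n) z | n. True} = range (\<lambda>n. (poly \<psi> ^^ n) z)" by blast
        then have "finite (range (\<lambda>n. (poly \<psi> ^^ n) z))"
          using z unfolding PrePer_def by simp
        then have "finite (UNIV :: nat set)" by (rule finite_imageD[OF _ injz])
        then show False by simp
      qed
    qed
    show "CC \<subseteq> PrePer (poly \<psi>)"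
    proof
      fix c assume c: "c \<in> CC"
      have "(poly \<psi> ^^ n) c \<in> CC" for n
        by (induction n) (use c subring_poly[OF CR ab(2)] in auto)
      then have "{(poly \<psi> ^^ n) c | n. True} \<subseteq> CC" by blast
      then have "finite {(poly \<psi> ^^ n) c | n. True}" using CC_fin by (rule finite_subset)
      then show "c \<in> PrePer (poly \<psi>)" unfolding PrePer_def by simp
    qed
  qed
  have injeta: "inj \<eta>" unfolding \<eta>_def using ab(1) by (intro injI) simp
  have PPf: "PrePer f = {y. \<eta> y \<in> CC}"
  proof -
    have "y \<in> PrePer f \<longleftrightarrow> \<eta> y \<in> PrePer (poly \<psi>)" for y
    proof -
      have img: "\<eta> ` {(f ^^ n) y | n. True} = {(poly \<psi> ^^ n) (\<eta> y) | n. True}"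
        unfolding iter by blast
      have "finite {(f ^^ n) y | n. True} \<longleftrightarrow> finite (\<eta> ` {(f ^^ n) y | n. True})"
        using injeta by (simp add: finite_image_iff inj_on_subset)
      then show ?thesis unfolding PrePer_def img by simp
    qed
    then show ?thesis using PP by blast
  qed
  have eqimg: "{y. \<eta> y \<in> CC} = (\<lambda>c. (c - \<beta>) / \<alpha>) ` CC"
  proof
    show "{y. \<eta> y \<in> CC} \<subseteq> (\<lambda>c. (c - \<beta>) / \<alpha>) ` CC"
    proof
      fix y assume "y \<in> {y. \<eta> y \<in> CC}"
      moreover have "y = (\<eta> y - \<beta>) / \<alpha>" unfolding \<eta>_def using ab(1) by simp
      ultimately show "y \<in> (\<lambda>c. (c - \<beta>) / \<alpha>) ` CC" by blast
    qed
    show "(\<lambda>c. (c - \<beta>) / \<alpha>) ` CC \<subseteq> {y. \<eta> y \<in> CC}"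
      unfolding \<eta>_def using ab(1) by auto
  qed
  have inj2: "inj_on (\<lambda>c. (c - \<beta>) / \<alpha>) CC" using ab(1) by (intro inj_onI) simp
  show ?thesis unfolding PPf eqimg using card_image[OF inj2] CC_fin by simp
qed

end

theorem theorem2p11:
  fixes \<phi> :: "'k::field poly" and vinf :: "'k \<Rightarrow> int" and d q :: nat
  assumes K: "global_function_field TYPE('k)"
    and inf: "dval vinf"
    and q: "q = card (constant_field :: 'k set)"
    and coeffs: "\<forall>i. coeff \<phi> i \<in> ring_O vinf"
    and d: "d = degree \<phi>" "d \<ge> 2"
    and lc: "lead_coeff \<phi> \<in> ring_O vinf" "inverse (lead_coeff \<phi>) \<in> ring_O vinf"
  shows "(\<not> conj_to_poly_over constant_field \<phi> \<and> Per (poly \<phi>) \<noteq> Fix (poly \<phi>)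
            \<and> \<not> two_cycles_condition (poly \<phi>)
            \<longrightarrow> finite (Per (poly \<phi>)) \<and> card (Per (poly \<phi>)) \<le> min d q)
       \<and> (conj_to_poly_over constant_field \<phi>
            \<longrightarrow> finite (PrePer (poly \<phi>)) \<and> card (PrePer (poly \<phi>)) = q)
       \<and> (Per (poly \<phi>) = Fix (poly \<phi>)
            \<longrightarrow> finite (Per (poly \<phi>)) \<and> card (Per (poly \<phi>)) \<le> d)"
proof -
  interpret dynsetup \<phi> vinf
    using K inf coeffs d lc by unfold_locales auto
  show ?thesis using main_bound part_a part_b q d(1) by blast
qed


end
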